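(* Let $A,B,C$ be finite-dimensional quantum systems, $C'$ a copy of $C$, and let $\Lambda^{C\to AB}$ be a channel extension of a channel $\Lambda^{C\to B}$. Then $\Lambda^{C\to AB}$ is steerable if and only if the Choi–Jamiołkowski state $J_{C'AB}(\Lambda^{C\to AB})$ is steerable by Alice acting on $A$ (i.e. steerable from $A$ to $BC'$).
   Context: A channel extension of $\Lambda^{C\to B}$ is a channel (completely positive trace-preserving map) $\Lambda^{C\to AB}$ with $\mathrm{Tr}_A\circ\Lambda^{C\to AB}=\Lambda^{C\to B}$. An instrument is a collection $\{\Lambda_\lambda\}_\lambda$ of completely positive maps whose sum is a channel. A channel assemblage $\{\Lambda_{a|x}\}_{a,x}$ for $\Lambda^{C\to B}$ is a collection of completely positive maps with $\sum_a\Lambda_{a|x}=\Lambda^{C\to B}$ for all $x$; it is unsteerable if there exist an instrument $\{\Lambda_\lambda\}_\lambda$ and conditional probability distributions $p(a|x,\lambda)$ with $\Lambda_{a|x}=\sum_\lambda p(a|x,\lambda)\Lambda_\lambda$. A measurement assemblage on $A$ is a family $\{M^A_{a|x}\}_{a,x}$ with $\{M^A_{a|x}\}_a$ a POVM for each $x$; it induces the channel assemblage $\Lambda_{a|x}[X]=\mathrm{Tr}_A(M^A_{a|x}\Lambda^{C\to AB}[X])$. The extension $\Lambda^{C\to AB}$ is unsteerable if every measurement assemblage on $A$ induces an unsteerable channel assemblage, and steerable otherwise. The Choi–Jamiołkowski operator of a map $\Gamma^{C\to Y}$ is $J_{C'Y}(\Gamma)=(\mathrm{id}_{C'}\otimes\Gamma)[\psi_+^{CC'}]$,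 where $\psi_+^{CC'}$ is a fixed maximally entangled pure state of $C$ and $C'$. A bipartite state $\rho^{XY}$ is unsteerable by (a party acting on) $X$ if for every measurement assemblage $\{M^X_{a|x}\}$ on $X$ the state assemblage $\rho_{a|x}=\mathrm{Tr}_X(M^X_{a|x}\rho^{XY})$ can be written as $\rho_{a|x}=\sum_\lambda p(a|x,\lambda)\rho_\lambda$ with $\rho_\lambda\ge0$, $\sum_\lambda\rho_\lambda=\rho^Y$ and $p(a|x,\lambda)$ conditional probability distributions; otherwise it is steerable by $X$. *)

theory Defs
  imports "Jordan_Normal_Form.Matrix"
begin

(* Operators on a d-dimensional system are complex d x d matrices (carrier_mat d d).
   Composite systems X (dim x) and Y (dim y) use index  iX * y + iY  (X first). *)

type_synonym cmap = "complex mat \<Rightarrow> complex mat"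

definition tr :: "nat \<Rightarrow> complex mat \<Rightarrow> complex" where
  "tr d M = (\<Sum>i<d. M $$ (i,i))"

definition psd :: "nat \<Rightarrow> complex mat \<Rightarrow> bool" where
  "psd d M \<longleftrightarrow> M \<in> carrier_mat d d \<and>
     (\<forall>v :: nat \<Rightarrow> complex. let z = (\<Sum>i<d. \<Sum>j<d. cnj (v i) * M $$ (i,j) * v j)
        in z \<in> \<real> \<and> Re z \<ge> 0)"

definition msum :: "nat \<Rightarrow> nat \<Rightarrow> (nat \<Rightarrow> complex mat) \<Rightarrow> complex mat" where
  "msum d n F = mat d d (\<lambda>(i,j). \<Sum>k<n. F k $$ (i,j))"

definition tensor :: "complex mat \<Rightarrow> complex mat \<Rightarrow> complex mat" where
  "tensor P Q = mat (dim_row P * dim_row Q) (dim_col P * dim_col Q)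
     (\<lambda>(i,j). P $$ (i div dim_row Q, j div dim_col Q) * Q $$ (i mod dim_row Q, j mod dim_col Q))"

definition ptrace1 :: "nat \<Rightarrow> nat \<Rightarrow> complex mat \<Rightarrow> complex mat" where
  "ptrace1 x y M = mat y y (\<lambda>(i,j). \<Sum>k<x. M $$ (k*y+i, k*y+j))"

definition linear_cmap :: "nat \<Rightarrow> nat \<Rightarrow> cmap \<Rightarrow> bool" where
  "linear_cmap din dout \<Phi> \<longleftrightarrow>
     (\<forall>X \<in> carrier_mat din din. \<Phi> X \<in> carrier_mat dout dout) \<and>
     (\<forall>X \<in> carrier_mat din din. \<forall>Y \<in> carrier_mat din din. \<Phi> (X + Y) = \<Phi> X + \<Phi> Y) \<and>
     (\<forall>X \<in> carrier_mat din din. \<forall>c. \<Phi> (c \<cdot>\<^sub>m X) = c \<cdot>\<^sub>m \<Phi> X)"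

(* (id_n \<otimes> \<Phi>) applied to an operator on N \<otimes> In, N of dimension n *)
definition id_tensor :: "nat \<Rightarrow> nat \<Rightarrow> nat \<Rightarrow> cmap \<Rightarrow> complex mat \<Rightarrow> complex mat" where
  "id_tensor n din dout \<Phi> X = mat (n*dout) (n*dout) (\<lambda>(i,j).
      \<Phi> (mat din din (\<lambda>(k,l). X $$ ((i div dout)*din + k, (j div dout)*din + l)))
        $$ (i mod dout, j mod dout))"

definition CP :: "nat \<Rightarrow> nat \<Rightarrow> cmap \<Rightarrow> bool" where
  "CP din dout \<Phi> \<longleftrightarrow> linear_cmap din dout \<Phi> \<and>
     (\<forall>n X. psd (n*din) X \<longrightarrow> psd (n*dout) (id_tensor n din dout \<Phi> X))"

definition TP :: "nat \<Rightarrow> nat \<Rightarrow> cmap \<Rightarrow> bool" where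
  "TP din dout \<Phi> \<longleftrightarrow> (\<forall>X \<in> carrier_mat din din. tr dout (\<Phi> X) = tr din X)"

definition channel :: "nat \<Rightarrow> nat \<Rightarrow> cmap \<Rightarrow> bool" where
  "channel din dout \<Phi> \<longleftrightarrow> CP din dout \<Phi> \<and> TP din dout \<Phi>"

definition channel_extension :: "nat \<Rightarrow> nat \<Rightarrow> nat \<Rightarrow> cmap \<Rightarrow> cmap \<Rightarrow> bool" where
  "channel_extension dA dB dC \<Lambda>AB \<Lambda>B \<longleftrightarrow> channel dC (dA*dB) \<Lambda>AB \<and>
     (\<forall>X \<in> carrier_mat dC dC. ptrace1 dA dB (\<Lambda>AB X) = \<Lambda>B X)"

definition cond_prob :: "nat \<Rightarrow> nat \<Rightarrow> nat \<Rightarrow> (nat \<Rightarrow> nat \<Rightarrow> nat \<Rightarrow> real) \<Rightarrow> bool" where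
  "cond_prob na nx nl p \<longleftrightarrow> (\<forall>x<nx. \<forall>l<nl.
     (\<forall>a<na. p a x l \<ge> 0) \<and> (\<Sum>a<na. p a x l) = 1)"

definition instrument :: "nat \<Rightarrow> nat \<Rightarrow> nat \<Rightarrow> (nat \<Rightarrow> cmap) \<Rightarrow> bool" where
  "instrument din dout nl I \<longleftrightarrow> (\<forall>l<nl. CP din dout (I l)) \<and>
     channel din dout (\<lambda>X. msum dout nl (\<lambda>l. I l X))"

definition channel_assemblage :: "nat \<Rightarrow> nat \<Rightarrow> nat \<Rightarrow> nat \<Rightarrow> cmap \<Rightarrow> (nat \<Rightarrow> nat \<Rightarrow> cmap) \<Rightarrow> bool" where
  "channel_assemblage din dout na nx \<Lambda> As \<longleftrightarrow>
     (\<forall>a<na. \<forall>x<nx. CP din dout (As a x)) \<and>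
     (\<forall>x<nx. \<forall>X \<in> carrier_mat din din. msum dout na (\<lambda>a. As a x X) = \<Lambda> X)"

definition unsteerable_channel_assemblage ::
  "nat \<Rightarrow> nat \<Rightarrow> nat \<Rightarrow> nat \<Rightarrow> (nat \<Rightarrow> nat \<Rightarrow> cmap) \<Rightarrow> bool" where
  "unsteerable_channel_assemblage din dout na nx As \<longleftrightarrow>
     (\<exists>nl I p. instrument din dout nl I \<and> cond_prob na nx nl p \<and>
        (\<forall>a<na. \<forall>x<nx. \<forall>X \<in> carrier_mat din din.
           As a x X = msum dout nl (\<lambda>l. complex_of_real (p a x l) \<cdot>\<^sub>m I l X)))"

definition meas_assemblage :: "nat \<Rightarrow> nat \<Rightarrow> nat \<Rightarrow> (nat \<Rightarrow> nat \<Rightarrow> complex mat) \<Rightarrow> bool" where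
  "meas_assemblage d na nx M \<longleftrightarrow> (\<forall>x<nx.
     (\<forall>a<na. psd d (M a x)) \<and> msum d na (\<lambda>a. M a x) = 1\<^sub>m d)"

definition induced_assemblage :: "nat \<Rightarrow> nat \<Rightarrow> cmap \<Rightarrow> (nat \<Rightarrow> nat \<Rightarrow> complex mat) \<Rightarrow> nat \<Rightarrow> nat \<Rightarrow> cmap" where
  "induced_assemblage dA dB \<Lambda>AB M a x X = ptrace1 dA dB (tensor (M a x) (1\<^sub>m dB) * \<Lambda>AB X)"

definition unsteerable_extension :: "nat \<Rightarrow> nat \<Rightarrow> nat \<Rightarrow> cmap \<Rightarrow> bool" where
  "unsteerable_extension dA dB dC \<Lambda>AB \<longleftrightarrow>
     (\<forall>na nx M. meas_assemblage dA na nx M \<longrightarrow>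
        unsteerable_channel_assemblage dC dB na nx (induced_assemblage dA dB \<Lambda>AB M))"

definition steerable_extension :: "nat \<Rightarrow> nat \<Rightarrow> nat \<Rightarrow> cmap \<Rightarrow> bool" where
  "steerable_extension dA dB dC \<Lambda>AB \<longleftrightarrow> \<not> unsteerable_extension dA dB dC \<Lambda>AB"

(* the maximally entangled state |psi+> = d^{-1/2} \<Sum>_i |i>|i> on C' \<otimes> C *)
definition psi_plus :: "nat \<Rightarrow> complex mat" where
  "psi_plus d = mat (d*d) (d*d) (\<lambda>(i,j).
     if i div d = i mod d \<and> j div d = j mod d then 1 / of_nat d else 0)"

definition choi :: "nat \<Rightarrow> nat \<Rightarrow> cmap \<Rightarrow> complex mat" where
  "choi dC dY \<Gamma> = id_tensor dC dC dY \<Gamma> (psi_plus dC)"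

definition unsteerable_state :: "nat \<Rightarrow> nat \<Rightarrow> complex mat \<Rightarrow> bool" where
  "unsteerable_state dX dY \<rho> \<longleftrightarrow>
     (\<forall>na nx M. meas_assemblage dX na nx M \<longrightarrow>
        (\<exists>nl \<sigma> p. (\<forall>l<nl. psd dY (\<sigma> l)) \<and> msum dY nl \<sigma> = ptrace1 dX dY \<rho> \<and>
           cond_prob na nx nl p \<and>
           (\<forall>a<na. \<forall>x<nx. ptrace1 dX dY (tensor (M a x) (1\<^sub>m dY) * \<rho>) =
               msum dY nl (\<lambda>l. complex_of_real (p a x l) \<cdot>\<^sub>m \<sigma> l))))"

definition steerable_state :: "nat \<Rightarrow> nat \<Rightarrow> complex mat \<Rightarrow> bool" where
  "steerable_state dX dY \<rho> \<longleftrightarrow> \<not> unsteerable_state dX dY \<rho>"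

(* reorder an operator on C' \<otimes> A \<otimes> B into A \<otimes> (C' \<otimes> B), so that A is the first party *)
definition reorder_CAB_to_A_CB :: "nat \<Rightarrow> nat \<Rightarrow> nat \<Rightarrow> complex mat \<Rightarrow> complex mat" where
  "reorder_CAB_to_A_CB dC dA dB J = mat (dA*(dC*dB)) (dA*(dC*dB)) (\<lambda>(i,j).
     let iA = i div (dC*dB); iC = (i mod (dC*dB)) div dB; iB = i mod dB;
         jA = j div (dC*dB); jC = (j mod (dC*dB)) div dB; jB = j mod dB
     in J $$ (iC*(dA*dB) + iA*dB + iB, jC*(dA*dB) + jA*dB + jB))"

end

theory Submission
  imports Defs
begin

lemma sum_lessThan_add_split:
  "(\<Sum>i<(m::nat)+n. f i) = (\<Sum>i<m. f i) + (\<Sum>i<n. f (m+i))"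
  by (induction n) (auto simp: add.assoc)

lemma sum_split_mult:
  fixes f :: "nat \<Rightarrow> 'a::comm_monoid_add"
  shows "(\<Sum>i<a*b. f i) = (\<Sum>k<a. \<Sum>j<b. f (k*b+j))"
proof (induction a)
  case 0 then show ?case by simp
next
  case (Suc a)
  have "(\<Sum>i<Suc a*b. f i) = (\<Sum>i<a*b + b. f i)" by (simp add: add.commute)
  also have "\<dots> = (\<Sum>i<a*b. f i) + (\<Sum>j<b. f (a*b+j))" by (rule sum_lessThan_add_split)
  finally show ?case using Suc by simp
qed

lemma divmod_lemma[simp]:
  fixes k j b :: nat
  assumes "j < b"
  shows "(k*b+j) div b = k" "(k*b+j) mod b = j"
  using assms by auto

lemma lt_mult_split: "(k::nat) < a \<Longrightarrow> j < b \<Longrightarrow> k*b+j < a*b"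
proof -
  assume "k < a" "j < b"
  then have "k*b + j < k*b + b" by simp
  also have "\<dots> = Suc k * b" by simp
  also have "\<dots> \<le> a*b" using \<open>k<a\<close> by (intro mult_right_mono) auto
  finally show ?thesis .
qed

lemma idx_decomp: "(i::nat) < a*b \<Longrightarrow> i = (i div b)*b + i mod b \<and> i div b < a \<and> i mod b < b"
  by (metis div_eq_0_iff less_mult_imp_div_less mod_less_divisor mult.commute
      mult_div_mod_eq not_gr0 not_less_zero mult_0_right)

definition Emat :: "nat \<Rightarrow> nat \<Rightarrow> nat \<Rightarrow> complex mat" where
  "Emat D c c' = mat D D (\<lambda>(k,l). if k = c \<and> l = c' then 1 else 0)"

lemma Emat_carrier[simp]: "Emat D c c' \<in> carrier_mat D D"
  by (simp add: Emat_def)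

lemma linear_cmapD:
  assumes "linear_cmap din dout \<Phi>"
  shows "X \<in> carrier_mat din din \<Longrightarrow> \<Phi> X \<in> carrier_mat dout dout"
    "X \<in> carrier_mat din din \<Longrightarrow> Y \<in> carrier_mat din din \<Longrightarrow> \<Phi> (X + Y) = \<Phi> X + \<Phi> Y"
    "X \<in> carrier_mat din din \<Longrightarrow> \<Phi> (c \<cdot>\<^sub>m X) = c \<cdot>\<^sub>m \<Phi> X"
  using assms unfolding linear_cmap_def by auto

lemma linear_reconstruct:
  assumes lin: "linear_cmap D dY \<Gamma>" and X: "X \<in> carrier_mat D D" and y: "y < dY" "y' < dY"
  shows "\<Gamma> X $$ (y,y') = (\<Sum>c<D. \<Sum>c'<D. X$$(c,c') * \<Gamma> (Emat D c c') $$ (y,y'))"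
proof -
  define P where "P S = mat D D (\<lambda>(i,j). if (i,j) \<in> S then X$$(i,j) else 0)" for S
  have P_car: "P S \<in> carrier_mat D D" for S by (simp add: P_def)
  have main: "finite S \<Longrightarrow> \<Gamma> (P S) $$ (y,y') = (\<Sum>(c,c')\<in>S. X$$(c,c') * \<Gamma> (Emat D c c') $$ (y,y'))" for S
  proof (induction S rule: finite_induct)
    case empty
    have "P {} = 0 \<cdot>\<^sub>m (0\<^sub>m D D)" by (auto simp: P_def)
    then have "\<Gamma> (P {}) = 0 \<cdot>\<^sub>m \<Gamma> (0\<^sub>m D D)" using linear_cmapD(3)[OF lin, of "0\<^sub>m D D" 0] by simp
    moreover have "\<Gamma> (0\<^sub>m D D) \<in> carrier_mat dY dY" using linear_cmapD(1)[OF lin] by simp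
    ultimately show ?case using y by simp
  next
    case (insert p S)
    obtain a b where p: "p = (a,b)" by (cases p)
    have eq: "P (insert p S) = P S + X$$(a,b) \<cdot>\<^sub>m Emat D a b"
      using insert(2) by (auto simp: P_def Emat_def p)
    have "\<Gamma> (P (insert p S)) = \<Gamma> (P S) + X$$(a,b) \<cdot>\<^sub>m \<Gamma> (Emat D a b)"
      unfolding eq using linear_cmapD[OF lin] P_car by simp
    moreover have "\<Gamma> (P S) \<in> carrier_mat dY dY" "\<Gamma> (Emat D a b) \<in> carrier_mat dY dY"
      using linear_cmapD(1)[OF lin] P_car by auto
    ultimately show ?case using insert y by (simp add: p add.commute)
  qed
  have "P ({..<D} \<times> {..<D}) = X" using X by (auto simp: P_def)
  then have "\<Gamma> X $$ (y,y') = (\<Sum>(c,c')\<in>{..<D} \<times> {..<D}. X$$(c,c') * \<Gamma> (Emat D c c') $$ (y,y'))"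
    using main[of "{..<D} \<times> {..<D}"] by simp
  also have "\<dots> = (\<Sum>c<D. \<Sum>c'<D. X$$(c,c') * \<Gamma> (Emat D c c') $$ (y,y'))"
    by (simp add: sum.cartesian_product)
  finally show ?thesis .
qed

lemma choi_entry:
  assumes "c < D" "c' < D" "y < dY" "y' < dY"
  shows "choi D dY \<Gamma> $$ (c*dY+y, c'*dY+y') = \<Gamma> (mat D D (\<lambda>(k,l). if k = c \<and> l = c' then 1/of_nat D else 0)) $$ (y,y')"
proof -
  have b: "c*dY+y < D*dY" "c'*dY+y' < D*dY" using assms lt_mult_split by auto
  have m: "mat D D (\<lambda>(k,l). psi_plus D $$ (c*D + k, c'*D + l)) = mat D D (\<lambda>(k,l). if k = c \<and> l = c' then 1/of_nat D else 0)"
    using assms lt_mult_split by (auto simp: psi_plus_def intro!: eq_matI)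
  show ?thesis unfolding choi_def id_tensor_def using b assms by (simp add: m)
qed

lemma choi_entry_lin:
  assumes lin: "linear_cmap D dY \<Gamma>" and "c < D" "c' < D" "y < dY" "y' < dY"
  shows "choi D dY \<Gamma> $$ (c*dY+y, c'*dY+y') = \<Gamma> (Emat D c c') $$ (y,y') / of_nat D"
proof -
  have "mat D D (\<lambda>(k,l). if k = c \<and> l = c' then 1/of_nat D else 0) = (1/of_nat D) \<cdot>\<^sub>m Emat D c c'"
    by (auto simp: Emat_def intro!: eq_matI)
  then show ?thesis using choi_entry[OF assms(2-)] linear_cmapD[OF lin, of "Emat D c c'"] assms
    by simp
qed

lemma linear_choi_reconstruct:
  assumes lin: "linear_cmap D dY \<Gamma>" and X: "X \<in> carrier_mat D D" and y: "y < dY" "y' < dY"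
    and D: "D > 0"
  shows "\<Gamma> X $$ (y,y') = of_nat D * (\<Sum>c<D. \<Sum>c'<D. X$$(c,c') * choi D dY \<Gamma> $$ (c*dY+y, c'*dY+y'))"
  unfolding linear_reconstruct[OF assms(1-4)] sum_distrib_left
  using D y by (intro sum.cong refl) (simp add: choi_entry_lin[OF lin])

lemma ptrace_tensor_mult:
  assumes N: "N \<in> carrier_mat dA dA" and Y: "Y \<in> carrier_mat (dA*d) (dA*d)" and i: "i < d" and j: "j < d"
  shows "ptrace1 dA d (tensor N (1\<^sub>m d) * Y) $$ (i,j) =
    (\<Sum>k<dA. \<Sum>k'<dA. N$$(k,k') * Y$$(k'*d+i, k*d+j))"
proof -
  have "ptrace1 dA d (tensor N (1\<^sub>m d) * Y) $$ (i,j) = (\<Sum>k<dA. (tensor N (1\<^sub>m d) * Y) $$ (k*d+i, k*d+j))"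
    using i j by (simp add: ptrace1_def)
  also have "\<dots> = (\<Sum>k<dA. \<Sum>k'<dA. N$$(k,k') * Y$$(k'*d+i, k*d+j))"
  proof (intro sum.cong refl)
    fix k assume k: "k \<in> {..<dA}"
    have b1: "k*d+i < dA*d" "k*d+j < dA*d" using k i j lt_mult_split by auto
    have "(tensor N (1\<^sub>m d) * Y) $$ (k*d+i, k*d+j) =
       (\<Sum>m<dA*d. tensor N (1\<^sub>m d) $$ (k*d+i, m) * Y $$ (m, k*d+j))"
      using b1 N Y by (simp add: tensor_def scalar_prod_def lessThan_atLeast0)
    also have "\<dots> = (\<Sum>k'<dA. \<Sum>i'<d. tensor N (1\<^sub>m d) $$ (k*d+i, k'*d+i') * Y $$ (k'*d+i', k*d+j))"
      by (rule sum_split_mult)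
    also have "\<dots> = (\<Sum>k'<dA. N$$(k,k') * Y$$(k'*d+i, k*d+j))"
    proof (intro sum.cong refl)
      fix k' assume k': "k' \<in> {..<dA}"
      have "(\<Sum>i'<d. tensor N (1\<^sub>m d) $$ (k*d+i, k'*d+i') * Y $$ (k'*d+i', k*d+j))
         = (\<Sum>i'<d. (if i' = i then N$$(k,k') * Y$$(k'*d+i, k*d+j) else 0))"
      proof (intro sum.cong refl)
        fix i' assume i': "i' \<in> {..<d}"
        have b2: "k'*d+i' < dA*d" using k' i' lt_mult_split by auto
        show "tensor N (1\<^sub>m d) $$ (k*d+i, k'*d+i') * Y $$ (k'*d+i', k*d+j) =
          (if i' = i then N$$(k,k') * Y$$(k'*d+i, k*d+j) else 0)"
          using b1 b2 i i' N by (simp add: tensor_def)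
      qed
      also have "\<dots> = N$$(k,k') * Y$$(k'*d+i, k*d+j)" using i by simp
      finally show "(\<Sum>i'<d. tensor N (1\<^sub>m d) $$ (k*d+i, k'*d+i') * Y $$ (k'*d+i', k*d+j)) = N$$(k,k') * Y$$(k'*d+i, k*d+j)" .
    qed
    finally show "(tensor N (1\<^sub>m d) * Y) $$ (k*d+i, k*d+j) = (\<Sum>k'<dA. N$$(k,k') * Y$$(k'*d+i, k*d+j))" .
  qed
  finally show ?thesis .
qed

lemma ptrace1_add: "A \<in> carrier_mat (x*y) (x*y) \<Longrightarrow> B \<in> carrier_mat (x*y) (x*y) \<Longrightarrow>
  ptrace1 x y (A + B) = ptrace1 x y A + ptrace1 x y B"
  by (auto simp: ptrace1_def sum.distrib lt_mult_split intro!: eq_matI)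

lemma ptrace1_smult: "A \<in> carrier_mat (x*y) (x*y) \<Longrightarrow>
  ptrace1 x y (c \<cdot>\<^sub>m A) = c \<cdot>\<^sub>m ptrace1 x y A"
  by (auto simp: ptrace1_def sum_distrib_left lt_mult_split intro!: eq_matI)

lemma tensor_carrier: "N \<in> carrier_mat a a \<Longrightarrow> tensor N (1\<^sub>m d) \<in> carrier_mat (a*d) (a*d)"
  by (simp add: tensor_def)

lemma linear_indmap:
  assumes lin: "linear_cmap dC (dA*dB) \<Lambda>" and N: "N \<in> carrier_mat dA dA"
  shows "linear_cmap dC dB (\<lambda>X. ptrace1 dA dB (tensor N (1\<^sub>m dB) * \<Lambda> X))"
proof -
  have T: "tensor N (1\<^sub>m dB) \<in> carrier_mat (dA*dB) (dA*dB)" using tensor_carrier[OF N] .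
  show ?thesis unfolding linear_cmap_def
  proof (intro conjI ballI allI)
    fix X :: "complex mat" assume "X \<in> carrier_mat dC dC"
    show "ptrace1 dA dB (tensor N (1\<^sub>m dB) * \<Lambda> X) \<in> carrier_mat dB dB" by (simp add: ptrace1_def)
  next
    fix X Y :: "complex mat" assume X: "X \<in> carrier_mat dC dC" and Y: "Y \<in> carrier_mat dC dC"
    have LX: "\<Lambda> X \<in> carrier_mat (dA*dB) (dA*dB)" and LY: "\<Lambda> Y \<in> carrier_mat (dA*dB) (dA*dB)"
      using linear_cmapD(1)[OF lin] X Y by auto
    show "ptrace1 dA dB (tensor N (1\<^sub>m dB) * \<Lambda> (X + Y)) =
          ptrace1 dA dB (tensor N (1\<^sub>m dB) * \<Lambda> X) + ptrace1 dA dB (tensor N (1\<^sub>m dB) * \<Lambda> Y)"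
      using linear_cmapD(2)[OF lin X Y] mult_add_distrib_mat[OF T LX LY] T LX LY
      by (simp add: ptrace1_add)
  next
    fix X :: "complex mat" and c assume X: "X \<in> carrier_mat dC dC"
    have LX: "\<Lambda> X \<in> carrier_mat (dA*dB) (dA*dB)" using linear_cmapD(1)[OF lin] X by auto
    show "ptrace1 dA dB (tensor N (1\<^sub>m dB) * \<Lambda> (c \<cdot>\<^sub>m X)) = c \<cdot>\<^sub>m ptrace1 dA dB (tensor N (1\<^sub>m dB) * \<Lambda> X)"
      using linear_cmapD(3)[OF lin X] mult_smult_distrib[OF T LX] T LX
      by (simp add: ptrace1_smult)
  qed
qed

lemma reorder_entry:
  assumes "k < dA" "k' < dA" "c < dC" "c' < dC" "b < dB" "b' < dB"
  shows "reorder_CAB_to_A_CB dC dA dB J $$ (k*(dC*dB) + (c*dB+b), k'*(dC*dB) + (c'*dB+b'))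
     = J $$ (c*(dA*dB) + (k*dB+b), c'*(dA*dB) + (k'*dB+b'))"
proof -
  have q1: "c*dB+b < dC*dB" "c'*dB+b' < dC*dB" using assms lt_mult_split by auto
  have r1: "k*(dC*dB) + (c*dB+b) < dA*(dC*dB)" "k'*(dC*dB) + (c'*dB+b') < dA*(dC*dB)"
    using assms q1 lt_mult_split by auto
  have m1: "(k*(dC*dB) + (c*dB+b)) mod dB = b" "(k'*(dC*dB) + (c'*dB+b')) mod dB = b'"
  proof -
    have e1: "k*(dC*dB) + (c*dB+b) = (k*dC + c)*dB + b" by (simp add: algebra_simps)
    show "(k*(dC*dB) + (c*dB+b)) mod dB = b" unfolding e1 using assms by simp
    have e2: "k'*(dC*dB) + (c'*dB+b') = (k'*dC + c')*dB + b'" by (simp add: algebra_simps)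
    show "(k'*(dC*dB) + (c'*dB+b')) mod dB = b'" unfolding e2 using assms by simp
  qed
  show ?thesis unfolding reorder_CAB_to_A_CB_def using r1 q1 m1 assms
    by (simp add: Let_def add.assoc)
qed

lemma channel_linear: "channel din dout \<Phi> \<Longrightarrow> linear_cmap din dout \<Phi>"
  by (simp add: channel_def CP_def)

lemma choi_carrier: "choi D dY \<Gamma> \<in> carrier_mat (D*dY) (D*dY)"
  by (simp add: choi_def id_tensor_def)

lemma reorder_carrier: "reorder_CAB_to_A_CB dC dA dB J \<in> carrier_mat (dA*(dC*dB)) (dA*(dC*dB))"
  by (simp add: reorder_CAB_to_A_CB_def)

lemma mat_eq_blocks:
  assumes "A \<in> carrier_mat (D*d) (D*d)" "B \<in> carrier_mat (D*d) (D*d)"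
    and "\<And>c b c' b'. c < D \<Longrightarrow> b < d \<Longrightarrow> c' < D \<Longrightarrow> b' < d \<Longrightarrow> A $$ (c*d+b, c'*d+b') = B $$ (c*d+b, c'*d+b')"
  shows "A = B"
proof (rule eq_matI)
  fix i j assume "i < dim_row B" "j < dim_col B"
  then have i: "i < D*d" and j: "j < D*d" using assms by auto
  from idx_decomp[OF i] idx_decomp[OF j] assms(3)[of "i div d" "i mod d" "j div d" "j mod d"]
  show "A $$ (i,j) = B $$ (i,j)" by metis
qed (use assms in auto)

lemma reduced_choi:
  assumes ext: "channel_extension dA dB dC \<Lambda>AB \<Lambda>B" and chB: "channel dC dB \<Lambda>B"
  shows "ptrace1 dA (dC*dB) (reorder_CAB_to_A_CB dC dA dB (choi dC (dA*dB) \<Lambda>AB)) = choi dC dB \<Lambda>B"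
proof (rule mat_eq_blocks)
  show "ptrace1 dA (dC*dB) (reorder_CAB_to_A_CB dC dA dB (choi dC (dA*dB) \<Lambda>AB)) \<in> carrier_mat (dC*dB) (dC*dB)"
    by (simp add: ptrace1_def)
  show "choi dC dB \<Lambda>B \<in> carrier_mat (dC*dB) (dC*dB)" by (rule choi_carrier)
  fix c b c' b' assume c: "c < dC" and b: "b < dB" and c': "c' < dC" and b': "b' < dB"
  have linAB: "linear_cmap dC (dA*dB) \<Lambda>AB" using ext by (simp add: channel_extension_def channel_linear)
  have linB: "linear_cmap dC dB \<Lambda>B" using chB by (simp add: channel_linear)
  have q: "c*dB+b < dC*dB" "c'*dB+b' < dC*dB" using c b c' b' lt_mult_split by auto
  have "ptrace1 dA (dC*dB) (reorder_CAB_to_A_CB dC dA dB (choi dC (dA*dB) \<Lambda>AB)) $$ (c*dB+b, c'*dB+b')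
    = (\<Sum>k<dA. reorder_CAB_to_A_CB dC dA dB (choi dC (dA*dB) \<Lambda>AB) $$ (k*(dC*dB) + (c*dB+b), k*(dC*dB) + (c'*dB+b')))"
    using q by (simp add: ptrace1_def)
  also have "\<dots> = (\<Sum>k<dA. \<Lambda>AB (Emat dC c c') $$ (k*dB+b, k*dB+b') / of_nat dC)"
  proof (intro sum.cong refl)
    fix k assume k: "k \<in> {..<dA}"
    have y: "k*dB+b < dA*dB" "k*dB+b' < dA*dB" using k b b' lt_mult_split by auto
    show "reorder_CAB_to_A_CB dC dA dB (choi dC (dA*dB) \<Lambda>AB) $$ (k*(dC*dB) + (c*dB+b), k*(dC*dB) + (c'*dB+b'))
      = \<Lambda>AB (Emat dC c c') $$ (k*dB+b, k*dB+b') / of_nat dC"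
      using reorder_entry[of k dA k c dC c' b dB b'] choi_entry_lin[OF linAB c c' y] k c c' b b' by simp
  qed
  also have "\<dots> = ptrace1 dA dB (\<Lambda>AB (Emat dC c c')) $$ (b,b') / of_nat dC"
    using b b' by (simp add: ptrace1_def sum_divide_distrib)
  also have "\<dots> = \<Lambda>B (Emat dC c c') $$ (b,b') / of_nat dC"
    using ext by (simp add: channel_extension_def)
  also have "\<dots> = choi dC dB \<Lambda>B $$ (c*dB+b, c'*dB+b')"
    using choi_entry_lin[OF linB c c' b b'] by simp
  finally show "ptrace1 dA (dC*dB) (reorder_CAB_to_A_CB dC dA dB (choi dC (dA*dB) \<Lambda>AB)) $$ (c*dB+b, c'*dB+b')
     = choi dC dB \<Lambda>B $$ (c*dB+b, c'*dB+b')" .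
qed

lemma assemblage_choi:
  assumes linAB: "linear_cmap dC (dA*dB) \<Lambda>AB" and N: "N \<in> carrier_mat dA dA"
  shows "ptrace1 dA (dC*dB) (tensor N (1\<^sub>m (dC*dB)) * reorder_CAB_to_A_CB dC dA dB (choi dC (dA*dB) \<Lambda>AB))
       = choi dC dB (\<lambda>X. ptrace1 dA dB (tensor N (1\<^sub>m dB) * \<Lambda>AB X))"
proof (rule mat_eq_blocks)
  show "ptrace1 dA (dC*dB) (tensor N (1\<^sub>m (dC*dB)) * reorder_CAB_to_A_CB dC dA dB (choi dC (dA*dB) \<Lambda>AB)) \<in> carrier_mat (dC*dB) (dC*dB)"
    by (simp add: ptrace1_def)
  show "choi dC dB (\<lambda>X. ptrace1 dA dB (tensor N (1\<^sub>m dB) * \<Lambda>AB X)) \<in> carrier_mat (dC*dB) (dC*dB)" by (rule choi_carrier)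
  fix c b c' b' assume c: "c < dC" and b: "b < dB" and c': "c' < dC" and b': "b' < dB"
  have q: "c*dB+b < dC*dB" "c'*dB+b' < dC*dB" using c b c' b' lt_mult_split by auto
  have R: "reorder_CAB_to_A_CB dC dA dB (choi dC (dA*dB) \<Lambda>AB) \<in> carrier_mat (dA*(dC*dB)) (dA*(dC*dB))"
    by (rule reorder_carrier)
  have LE: "\<Lambda>AB (Emat dC c c') \<in> carrier_mat (dA*dB) (dA*dB)" using linear_cmapD(1)[OF linAB] by simp
  have "ptrace1 dA (dC*dB) (tensor N (1\<^sub>m (dC*dB)) * reorder_CAB_to_A_CB dC dA dB (choi dC (dA*dB) \<Lambda>AB)) $$ (c*dB+b, c'*dB+b')
     = (\<Sum>k<dA. \<Sum>k'<dA. N$$(k,k') * reorder_CAB_to_A_CB dC dA dB (choi dC (dA*dB) \<Lambda>AB) $$ (k'*(dC*dB)+(c*dB+b), k*(dC*dB)+(c'*dB+b')))"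
    by (rule ptrace_tensor_mult[OF N R q])
  also have "\<dots> = (\<Sum>k<dA. \<Sum>k'<dA. N$$(k,k') * \<Lambda>AB (Emat dC c c') $$ (k'*dB+b, k*dB+b') / of_nat dC)"
  proof (intro sum.cong refl)
    fix k k' assume k: "k \<in> {..<dA}" and k': "k' \<in> {..<dA}"
    have y: "k'*dB+b < dA*dB" "k*dB+b' < dA*dB" using k k' b b' lt_mult_split by auto
    show "N$$(k,k') * reorder_CAB_to_A_CB dC dA dB (choi dC (dA*dB) \<Lambda>AB) $$ (k'*(dC*dB)+(c*dB+b), k*(dC*dB)+(c'*dB+b'))
      = N$$(k,k') * \<Lambda>AB (Emat dC c c') $$ (k'*dB+b, k*dB+b') / of_nat dC"
      using reorder_entry[of k' dA k c dC c' b dB b'] choi_entry_lin[OF linAB c c' y] k k' c c' b b' by simp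
  qed
  also have "\<dots> = ptrace1 dA dB (tensor N (1\<^sub>m dB) * \<Lambda>AB (Emat dC c c')) $$ (b,b') / of_nat dC"
    unfolding ptrace_tensor_mult[OF N LE b b'] by (simp add: sum_divide_distrib)
  also have "\<dots> = choi dC dB (\<lambda>X. ptrace1 dA dB (tensor N (1\<^sub>m dB) * \<Lambda>AB X)) $$ (c*dB+b, c'*dB+b')"
    using choi_entry_lin[OF linear_indmap[OF linAB N] c c' b b'] by simp
  finally show "ptrace1 dA (dC*dB) (tensor N (1\<^sub>m (dC*dB)) * reorder_CAB_to_A_CB dC dA dB (choi dC (dA*dB) \<Lambda>AB)) $$ (c*dB+b, c'*dB+b')
     = choi dC dB (\<lambda>X. ptrace1 dA dB (tensor N (1\<^sub>m dB) * \<Lambda>AB X)) $$ (c*dB+b, c'*dB+b')" .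
qed

definition bf :: "nat \<Rightarrow> (nat \<Rightarrow> nat \<Rightarrow> complex) \<Rightarrow> (nat \<Rightarrow> complex) \<Rightarrow> (nat \<Rightarrow> complex) \<Rightarrow> complex" where
  "bf d A u v = (\<Sum>i<d. \<Sum>j<d. cnj (u i) * A i j * v j)"

definition psdf :: "nat \<Rightarrow> (nat \<Rightarrow> nat \<Rightarrow> complex) \<Rightarrow> bool" where
  "psdf d A \<longleftrightarrow> (\<forall>v. bf d A v v \<in> \<real> \<and> Re (bf d A v v) \<ge> 0)"

lemma psd_psdf: "psd d M \<longleftrightarrow> M \<in> carrier_mat d d \<and> psdf d (\<lambda>i j. M $$ (i,j))"
  by (simp add: psd_def psdf_def bf_def Let_def)

lemma bf_add_left: "bf d A (\<lambda>i. u1 i + u2 i) v = bf d A u1 v + bf d A u2 v"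
  by (simp add: bf_def ring_distribs sum.distrib)

lemma bf_add_right: "bf d A u (\<lambda>i. v1 i + v2 i) = bf d A u v1 + bf d A u v2"
  by (simp add: bf_def ring_distribs sum.distrib)

lemma bf_delta_left: "k < d \<Longrightarrow> bf d A (\<lambda>i. if i = k then \<tau> else 0) v = cnj \<tau> * (\<Sum>j<d. A k j * v j)"
proof -
  assume k: "k < d"
  have "bf d A (\<lambda>i. if i = k then \<tau> else 0) v = (\<Sum>i<d. if i = k then cnj \<tau> * (\<Sum>j<d. A k j * v j) else 0)"
    unfolding bf_def by (intro sum.cong refl) (auto simp: sum_distrib_left mult.assoc)
  also have "\<dots> = cnj \<tau> * (\<Sum>j<d. A k j * v j)" using k by simp
  finally show ?thesis .
qed

lemma bf_delta_right: "k < d \<Longrightarrow> bf d A u (\<lambda>j. if j = k then \<tau> else 0) = (\<Sum>i<d. cnj (u i) * A i k) * \<tau>"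
proof -
  assume k: "k < d"
  have "bf d A u (\<lambda>j. if j = k then \<tau> else 0) = (\<Sum>i<d. cnj (u i) * A i k * \<tau>)"
    unfolding bf_def by (intro sum.cong refl) (auto simp: k if_distrib cong: if_cong)
  also have "\<dots> = (\<Sum>i<d. cnj (u i) * A i k) * \<tau>" by (simp add: sum_distrib_right)
  finally show ?thesis .
qed

lemma bf_delta_both: "k < d \<Longrightarrow> l < d \<Longrightarrow> bf d A (\<lambda>i. if i = k then \<alpha> else 0) (\<lambda>j. if j = l then \<beta> else 0) = cnj \<alpha> * A k l * \<beta>"
  by (simp add: bf_delta_left if_distrib cong: if_cong)



lemma bf_two:
  assumes "i < d" "j < d"
  shows "bf d A (\<lambda>k. (if k = i then \<alpha> else 0) + (if k = j then \<beta> else 0)) (\<lambda>k. (if k = i then \<alpha> else 0) + (if k = j then \<beta> else 0))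
    = cnj \<alpha> * A i i * \<alpha> + cnj \<alpha> * A i j * \<beta> + cnj \<beta> * A j i * \<alpha> + cnj \<beta> * A j j * \<beta>"
  unfolding bf_add_left bf_add_right using assms by (simp add: bf_delta_both)

lemma psdfD: "psdf d A \<Longrightarrow> bf d A v v \<in> \<real> \<and> Re (bf d A v v) \<ge> 0"
  by (simp add: psdf_def)

lemma psdf_diag: "psdf d A \<Longrightarrow> k < d \<Longrightarrow> A k k \<in> \<real> \<and> Re (A k k) \<ge> 0"
proof -
  assume P: "psdf d A" and k: "k < d"
  have "bf d A (\<lambda>i. if i = k then 1 else 0) (\<lambda>i. if i = k then 1 else 0) = A k k"
    using bf_delta_both[OF k k, of A 1 1] by simp
  then show ?thesis using psdfD[OF P] by metis
qed

lemma psdf_herm: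
  assumes P: "psdf d A" and i: "i < d" and j: "j < d"
  shows "A j i = cnj (A i j)"
proof (cases "i = j")
  case True
  have "A i i \<in> \<real>" using psdf_diag[OF P i] by blast
  then have "cnj (A i i) = A i i" using Reals_cnj_iff by blast
  then show ?thesis using True by simp
next
  case False
  have ri: "A i i \<in> \<real>" and rj: "A j j \<in> \<real>" using psdf_diag[OF P] i j by auto
  have r1: "A i i + A i j + A j i + A j j \<in> \<real>"
  proof -
    have "bf d A (\<lambda>k. (if k = i then 1 else 0) + (if k = j then 1 else 0)) (\<lambda>k. (if k = i then 1 else 0) + (if k = j then 1 else 0)) = A i i + A i j + A j i + A j j"
      using bf_two[OF i j, of A 1 1] by simp
    moreover have "bf d A (\<lambda>k. (if k = i then 1 else 0) + (if k = j then 1 else 0)) (\<lambda>k. (if k = i then 1 else 0) + (if k = j then 1 else 0)) \<in> \<real>"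
      using psdfD[OF P] by blast
    ultimately show ?thesis by simp
  qed
  have r2: "A i i + \<i> * A i j - \<i> * A j i + A j j \<in> \<real>"
  proof -
    have "cnj 1 * A i i * 1 + cnj 1 * A i j * \<i> + cnj \<i> * A j i * 1 + cnj \<i> * A j j * \<i> = A i i + \<i> * A i j - \<i> * A j i + A j j"
      by (simp add: algebra_simps)
    then have "bf d A (\<lambda>k. (if k = i then 1 else 0) + (if k = j then \<i> else 0)) (\<lambda>k. (if k = i then 1 else 0) + (if k = j then \<i> else 0)) = A i i + \<i> * A i j - \<i> * A j i + A j j"
      using bf_two[OF i j, of A 1 \<i>] by simp
    moreover have "bf d A (\<lambda>k. (if k = i then 1 else 0) + (if k = j then \<i> else 0)) (\<lambda>k. (if k = i then 1 else 0) + (if k = j then \<i> else 0)) \<in> \<real>"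
      using psdfD[OF P] by blast
    ultimately show ?thesis by simp
  qed
  have "Im (A i j + A j i) = 0" using r1 ri rj by (auto simp: complex_is_Real_iff)
  moreover have "Re (A i j - A j i) = 0" using r2 ri rj by (auto simp: complex_is_Real_iff)
  ultimately show ?thesis by (simp add: complex_eq_iff)
qed

lemma psdf_zero_row:
  assumes P: "psdf d A" and k: "k < d" and j: "j < d" and z0: "A k k = 0"
  shows "A k j = 0"
proof (cases "j = k")
  case True then show ?thesis using z0 by simp
next
  case False
  show ?thesis
  proof (rule ccontr)
    define z where "z = A k j"
    assume "A k j \<noteq> 0"
    then have zn: "z \<noteq> 0" by (simp add: z_def)
    define n where "n = (cmod z)^2"
    have n0: "n > 0" using zn by (simp add: n_def)
    have czz: "cnj z * z = of_real n" unfolding n_def using complex_norm_square[of z] by (simp add: mult.commute)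
    define r where "r = (Re (A j j) + 1) / (2*n)"
    define t where "t = - of_real r * z"
    have hjk: "A j k = cnj z" using psdf_herm[OF P k j] by (simp add: z_def)
    have "bf d A (\<lambda>i. (if i = k then t else 0) + (if i = j then 1 else 0)) (\<lambda>i. (if i = k then t else 0) + (if i = j then 1 else 0))
      = cnj t * A k k * t + cnj t * A k j * 1 + cnj 1 * A j k * t + cnj 1 * A j j * 1"
      by (rule bf_two[OF k j])
    also have "\<dots> = cnj t * z + cnj z * t + A j j" using z0 hjk by (simp add: z_def)
    also have "\<dots> = - of_real (2*r*n) + A j j" unfolding t_def
      using czz by (simp add: algebra_simps)
    finally have eq: "bf d A (\<lambda>i. (if i = k then t else 0) + (if i = j then 1 else 0)) (\<lambda>i. (if i = k then t else 0) + (if i = j then 1 else 0)) = - of_real (2*r*n) + A j j" .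
    have "2*r*n = Re (A j j) + 1" unfolding r_def using n0 by simp
    then have "Re (- of_real (2*r*n) + A j j) = -1" by simp
    moreover have "Re (bf d A (\<lambda>i. (if i = k then t else 0) + (if i = j then 1 else 0)) (\<lambda>i. (if i = k then t else 0) + (if i = j then 1 else 0))) \<ge> 0"
      using psdfD[OF P] by blast
    ultimately show False using eq by simp
  qed
qed

lemma sum_if_right: "k < (d::nat) \<Longrightarrow> (\<Sum>j<d. f j * (if j = k then \<tau> else 0)) = f k * (\<tau>::complex)"
  by (simp add: if_distrib cong: if_cong)

lemma bf_shift:
  assumes k: "k < d"
  shows "bf d A (\<lambda>i. v i + (if i = k then \<tau> else 0)) (\<lambda>i. v i + (if i = k then \<tau> else 0))
     = bf d A v v + (\<Sum>i<d. cnj (v i) * A i k) * \<tau> + cnj \<tau> * (\<Sum>j<d. A k j * v j) + cnj \<tau> * A k k * \<tau>"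
  unfolding bf_add_left bf_add_right using k by (simp add: bf_delta_left bf_delta_right sum_if_right)

lemma bf_schur:
  "bf d (\<lambda>s t. A s t - A s k * A k t / a) v v = bf d A v v - (\<Sum>i<d. cnj (v i) * A i k) * (\<Sum>j<d. A k j * v j) / a"
proof -
  have "bf d (\<lambda>s t. A s t - A s k * A k t / a) v v = (\<Sum>i<d. \<Sum>j<d. cnj (v i) * A i j * v j - cnj (v i) * A i k * (A k j * v j) / a)"
    unfolding bf_def by (intro sum.cong refl) (simp add: algebra_simps)
  also have "\<dots> = bf d A v v - (\<Sum>i<d. \<Sum>j<d. cnj (v i) * A i k * (A k j * v j)) / a"
    unfolding bf_def by (simp add: sum_subtractf sum_divide_distrib)
  also have "(\<Sum>i<d. \<Sum>j<d. cnj (v i) * A i k * (A k j * v j)) = (\<Sum>i<d. cnj (v i) * A i k) * (\<Sum>j<d. A k j * v j)"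
    by (simp add: sum_product)
  finally show ?thesis .
qed

lemma psdf_schur:
  assumes P: "psdf d A" and k: "k < d" and a: "A k k \<noteq> 0"
  shows "psdf d (\<lambda>s t. A s t - A s k * A k t / A k k)"
  unfolding psdf_def
proof
  fix v
  define \<beta> where "\<beta> = (\<Sum>j<d. A k j * v j)"
  define \<gamma> where "\<gamma> = (\<Sum>i<d. cnj (v i) * A i k)"
  define \<tau> where "\<tau> = - \<beta> / A k k"
  have "bf d A (\<lambda>i. v i + (if i = k then \<tau> else 0)) (\<lambda>i. v i + (if i = k then \<tau> else 0))
     = bf d A v v + \<gamma> * \<tau> + cnj \<tau> * \<beta> + cnj \<tau> * A k k * \<tau>"
    using bf_shift[OF k] by (simp add: \<beta>_def \<gamma>_def)
  also have "cnj \<tau> * A k k * \<tau> = - cnj \<tau> * \<beta>" using a by (simp add: \<tau>_def)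
  also have "bf d A v v + \<gamma> * \<tau> + cnj \<tau> * \<beta> + - cnj \<tau> * \<beta> = bf d A v v - \<gamma> * \<beta> / A k k"
    by (simp add: \<tau>_def)
  also have "\<dots> = bf d (\<lambda>s t. A s t - A s k * A k t / A k k) v v"
    by (simp add: bf_schur \<beta>_def \<gamma>_def)
  finally have eq: "bf d A (\<lambda>i. v i + (if i = k then \<tau> else 0)) (\<lambda>i. v i + (if i = k then \<tau> else 0)) = bf d (\<lambda>s t. A s t - A s k * A k t / A k k) v v" .
  show "bf d (\<lambda>s t. A s t - A s k * A k t / A k k) v v \<in> \<real> \<and> 0 \<le> Re (bf d (\<lambda>s t. A s t - A s k * A k t / A k k) v v)"
    unfolding eq[symmetric] by (rule psdfD[OF P])
qed

lemma decomp_aux: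
  "\<forall>A k. d - k = m \<longrightarrow> psdf d A \<longrightarrow> (\<forall>i<d. \<forall>j<d. (i < k \<or> j < k) \<longrightarrow> A i j = 0) \<longrightarrow>
     (\<exists>(R::nat) w. \<forall>s<d. \<forall>t<d. A s t = (\<Sum>r<R. w r s * cnj (w r t)))"
proof (induction m)
  case 0
  show ?case
  proof (intro allI impI)
    fix A :: "nat \<Rightarrow> nat \<Rightarrow> complex" and k assume dk: "d - k = 0" and "psdf d A" and Z: "\<forall>i<d. \<forall>j<d. (i < k \<or> j < k) \<longrightarrow> A i j = 0"
    have "\<forall>s<d. \<forall>t<d. A s t = (\<Sum>r<(0::nat). (\<lambda>_ _. 0::complex) r s * cnj ((\<lambda>_ _. 0::complex) r t))"
    proof (intro allI impI)
      fix s t assume st: "s < d" "t < d"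
      have "s < k" using dk st by linarith
      then show "A s t = (\<Sum>r<(0::nat). (\<lambda>_ _. 0::complex) r s * cnj ((\<lambda>_ _. 0::complex) r t))" using Z st by simp
    qed
    then have zz: "\<forall>s<d. \<forall>t<d. A s t = 0" by simp
    show "\<exists>(R::nat) w. \<forall>s<d. \<forall>t<d. A s t = (\<Sum>r<R. w r s * cnj (w r t))"
    proof (rule exI[of _ "0::nat"], rule exI[of _ "\<lambda>_ _. 0::complex"])
      show "\<forall>s<d. \<forall>t<d. A s t = (\<Sum>r<(0::nat). (\<lambda>_ _. 0::complex) r s * cnj ((\<lambda>_ _. 0::complex) r t))"
        using zz by simp
    qed
  qed
next
  case (Suc m)
  show ?case
  proof (intro allI impI)
    fix A k assume dk: "d - k = Suc m" and P: "psdf d A" and Z: "\<forall>i<d. \<forall>j<d. (i < k \<or> j < k) \<longrightarrow> A i j = 0"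
    have k: "k < d" and dk1: "d - Suc k = m" using dk by auto
    show "\<exists>(R::nat) w. \<forall>s<d. \<forall>t<d. A s t = (\<Sum>r<R. w r s * cnj (w r t))"
    proof (cases "A k k = 0")
      case True
      have row: "A k j = 0" if "j < d" for j using psdf_zero_row[OF P k that True] .
      have col: "A j k = 0" if "j < d" for j using psdf_herm[OF P k that] row[OF that] by simp
      have Zs: "\<forall>i<d. \<forall>j<d. (i < Suc k \<or> j < Suc k) \<longrightarrow> A i j = 0"
      proof (intro allI impI)
        fix i j assume i: "i < d" and j: "j < d" and ij: "i < Suc k \<or> j < Suc k"
        show "A i j = 0"
        proof (cases "i = k")
          case True then show ?thesis using row j by simp
        next
          case F1: False
          show ?thesis
          proof (cases "j = k")
            case True then show ?thesis using col i by simp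
          next
            case False
            then have "i < k \<or> j < k" using F1 ij by linarith
            then show ?thesis using Z i j by blast
          qed
        qed
      qed
      show ?thesis by (rule Suc.IH[THEN spec[of _ A], THEN spec[of _ "Suc k"], THEN mp, THEN mp, THEN mp, OF dk1 P Zs])
    next
      case False
      define A' where "A' = (\<lambda>s t. A s t - A s k * A k t / A k k)"
      have P': "psdf d A'" unfolding A'_def by (rule psdf_schur[OF P k False])
      have Z': "\<forall>i<d. \<forall>j<d. (i < Suc k \<or> j < Suc k) \<longrightarrow> A' i j = 0"
      proof (intro allI impI)
        fix i j assume i: "i < d" and j: "j < d" and ij: "i < Suc k \<or> j < Suc k"
        show "A' i j = 0"
        proof (cases "i < k")
          case True then show ?thesis using Z i j k by (simp add: A'_def)
        next
          case ni: False
          show ?thesis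
          proof (cases "i = k")
            case True then show ?thesis using False by (simp add: A'_def)
          next
            case False
            then have "j < Suc k" using ni ij by simp
            then show ?thesis
            proof (cases "j < k")
              case True then show ?thesis using Z i j k by (simp add: A'_def)
            next
              case False
              then have "j = k" using \<open>j < Suc k\<close> by simp
              then show ?thesis using \<open>A k k \<noteq> 0\<close> by (simp add: A'_def)
            qed
          qed
        qed
      qed
      obtain R :: nat and w where w: "\<forall>s<d. \<forall>t<d. A' s t = (\<Sum>r<R. w r s * cnj (w r t))"
        using Suc.IH[THEN spec[of _ A'], THEN spec[of _ "Suc k"], THEN mp, THEN mp, THEN mp, OF dk1 P' Z'] by (elim exE)
      have re: "A k k \<in> \<real>" and ge: "Re (A k k) \<ge> 0" using psdf_diag[OF P k] by auto
      define a where "a = Re (A k k)"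
      have akk: "A k k = of_real a" using re by (simp add: a_def complex_is_Real_iff complex_eq_iff)
      have "a \<noteq> 0" using False akk by auto
      then have a0: "a > 0" using ge unfolding a_def by linarith
      define w' where "w' = (\<lambda>r. if r < R then w r else (\<lambda>s. A s k / of_real (sqrt a)))"
      have "\<forall>s<d. \<forall>t<d. A s t = (\<Sum>r<Suc R. w' r s * cnj (w' r t))"
      proof (intro allI impI)
        fix s t assume s: "s < d" and t: "t < d"
        have h: "cnj (A t k) = A k t" using psdf_herm[OF P t k] by simp
        have "(\<Sum>r<Suc R. w' r s * cnj (w' r t)) = (\<Sum>r<R. w' r s * cnj (w' r t)) + w' R s * cnj (w' R t)"
          by (rule sum.lessThan_Suc)
        also have "(\<Sum>r<R. w' r s * cnj (w' r t)) = (\<Sum>r<R. w r s * cnj (w r t))"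
          by (intro sum.cong refl) (simp add: w'_def)
        also have "w' R s * cnj (w' R t) = A s k / of_real (sqrt a) * cnj (A t k / of_real (sqrt a))"
          by (simp add: w'_def)
        also have "A s k / of_real (sqrt a) * cnj (A t k / of_real (sqrt a)) = A s k * A k t / A k k"
        proof -
          define x where "x = (of_real (sqrt a) :: complex)"
          have xx: "x * x = A k k" unfolding x_def akk of_real_mult[symmetric] using a0 by simp
          have c1: "cnj (A t k / x) = A k t / x" using h by (simp add: x_def)
          have "A s k / x * (A k t / x) = A s k * A k t / (x * x)" by (rule times_divide_times_eq)
          then show ?thesis using c1 xx h by (simp add: x_def)
        qed
        also have "(\<Sum>r<R. w r s * cnj (w r t)) = A' s t" using w s t by simp
        finally show "A s t = (\<Sum>r<Suc R. w' r s * cnj (w' r t))" by (simp add: A'_def)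
      qed
      then show ?thesis by (intro exI)
    qed
  qed
qed

lemma psdf_decomp:
  assumes "psdf d A"
  shows "\<exists>(R::nat) w. \<forall>s<d. \<forall>t<d. A s t = (\<Sum>r<R. w r s * cnj (w r t))"
  using decomp_aux[of d d, rule_format, of 0 A] assms by simp


lemma reorder6:
  "(\<Sum>b\<in>B. \<Sum>m'\<in>A. \<Sum>b'\<in>B. \<Sum>c\<in>C. \<Sum>c'\<in>C. F b m' b' c c') =
   (\<Sum>c\<in>C. \<Sum>m'\<in>A. \<Sum>c'\<in>C. \<Sum>b\<in>B. \<Sum>b'\<in>B. F b m' b' c c')"
proof -
  have "(\<Sum>b\<in>B. \<Sum>m'\<in>A. \<Sum>b'\<in>B. \<Sum>c\<in>C. \<Sum>c'\<in>C. F b m' b' c c') =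
        (\<Sum>m'\<in>A. \<Sum>b\<in>B. \<Sum>b'\<in>B. \<Sum>c\<in>C. \<Sum>c'\<in>C. F b m' b' c c')" by (rule sum.swap)
  also have "\<dots> = (\<Sum>m'\<in>A. \<Sum>b\<in>B. \<Sum>c\<in>C. \<Sum>b'\<in>B. \<Sum>c'\<in>C. F b m' b' c c')"
    by (intro sum.cong refl) (rule sum.swap)
  also have "\<dots> = (\<Sum>m'\<in>A. \<Sum>b\<in>B. \<Sum>c\<in>C. \<Sum>c'\<in>C. \<Sum>b'\<in>B. F b m' b' c c')"
    by (intro sum.cong refl) (rule sum.swap)
  also have "\<dots> = (\<Sum>m'\<in>A. \<Sum>c\<in>C. \<Sum>b\<in>B. \<Sum>c'\<in>C. \<Sum>b'\<in>B. F b m' b' c c')"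
    by (intro sum.cong refl) (rule sum.swap)
  also have "\<dots> = (\<Sum>m'\<in>A. \<Sum>c\<in>C. \<Sum>c'\<in>C. \<Sum>b\<in>B. \<Sum>b'\<in>B. F b m' b' c c')"
    by (intro sum.cong refl) (rule sum.swap)
  also have "\<dots> = (\<Sum>c\<in>C. \<Sum>m'\<in>A. \<Sum>c'\<in>C. \<Sum>b\<in>B. \<Sum>b'\<in>B. F b m' b' c c')"
    by (rule sum.swap)
  finally show ?thesis .
qed

lemma reorder5:
  "(\<Sum>m\<in>A. \<Sum>c\<in>C. \<Sum>m'\<in>A. \<Sum>c'\<in>C. \<Sum>r\<in>R. F m c m' c' r) =
   (\<Sum>r\<in>R. \<Sum>m\<in>A. \<Sum>c\<in>C. \<Sum>m'\<in>A. \<Sum>c'\<in>C. F m c m' c' r)"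
proof -
  have "(\<Sum>m\<in>A. \<Sum>c\<in>C. \<Sum>m'\<in>A. \<Sum>c'\<in>C. \<Sum>r\<in>R. F m c m' c' r) =
        (\<Sum>m\<in>A. \<Sum>c\<in>C. \<Sum>m'\<in>A. \<Sum>r\<in>R. \<Sum>c'\<in>C. F m c m' c' r)"
    by (intro sum.cong refl) (rule sum.swap)
  also have "\<dots> = (\<Sum>m\<in>A. \<Sum>c\<in>C. \<Sum>r\<in>R. \<Sum>m'\<in>A. \<Sum>c'\<in>C. F m c m' c' r)"
    by (intro sum.cong refl) (rule sum.swap)
  also have "\<dots> = (\<Sum>m\<in>A. \<Sum>r\<in>R. \<Sum>c\<in>C. \<Sum>m'\<in>A. \<Sum>c'\<in>C. F m c m' c' r)"
    by (intro sum.cong refl) (rule sum.swap)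
  also have "\<dots> = (\<Sum>r\<in>R. \<Sum>m\<in>A. \<Sum>c\<in>C. \<Sum>m'\<in>A. \<Sum>c'\<in>C. F m c m' c' r)"
    by (rule sum.swap)
  finally show ?thesis .
qed

lemma reorder3:
  "(\<Sum>r\<in>R. \<Sum>b\<in>B. \<Sum>b'\<in>B. F r b b') = (\<Sum>b\<in>B. \<Sum>b'\<in>B. \<Sum>r\<in>R. F r b b')"
proof -
  have "(\<Sum>r\<in>R. \<Sum>b\<in>B. \<Sum>b'\<in>B. F r b b') = (\<Sum>b\<in>B. \<Sum>r\<in>R. \<Sum>b'\<in>B. F r b b')" by (rule sum.swap)
  also have "\<dots> = (\<Sum>b\<in>B. \<Sum>b'\<in>B. \<Sum>r\<in>R. F r b b')" by (intro sum.cong refl) (rule sum.swap)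
  finally show ?thesis .
qed

lemma key_form:
  fixes Xf Sf :: "nat \<Rightarrow> nat \<Rightarrow> complex" and w :: "nat \<Rightarrow> nat \<Rightarrow> complex" and v :: "nat \<Rightarrow> complex"
  assumes S: "\<forall>s<D*dB. \<forall>t<D*dB. Sf s t = (\<Sum>r<R. w r s * cnj (w r t))"
  defines "u \<equiv> (\<lambda>r p. \<Sum>b<dB. cnj (w r ((p mod D)*dB + b)) * v ((p div D)*dB + b))"
  shows "(\<Sum>i<n*dB. \<Sum>j<n*dB. cnj (v i) * (of_nat D * (\<Sum>c<D. \<Sum>c'<D. Xf ((i div dB)*D+c) ((j div dB)*D+c') * Sf (c*dB + i mod dB) (c'*dB + j mod dB))) * v j)
     = of_nat D * (\<Sum>r<R. bf (n*D) Xf (u r) (u r))"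
proof -
  define F where "F = (\<lambda>m b m' b' c c'. cnj (v (m*dB+b)) * Xf (m*D+c) (m'*D+c') * Sf (c*dB+b) (c'*dB+b') * v (m'*dB+b'))"
  have "(\<Sum>i<n*dB. \<Sum>j<n*dB. cnj (v i) * (of_nat D * (\<Sum>c<D. \<Sum>c'<D. Xf ((i div dB)*D+c) ((j div dB)*D+c') * Sf (c*dB + i mod dB) (c'*dB + j mod dB))) * v j)
    = (\<Sum>m<n. \<Sum>b<dB. \<Sum>m'<n. \<Sum>b'<dB. cnj (v (m*dB+b)) * (of_nat D * (\<Sum>c<D. \<Sum>c'<D. Xf (m*D+c) (m'*D+c') * Sf (c*dB + b) (c'*dB + b'))) * v (m'*dB+b'))"
    unfolding sum_split_mult[of _ n dB] by (intro sum.cong refl) simp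
  also have "\<dots> = of_nat D * (\<Sum>m<n. \<Sum>b<dB. \<Sum>m'<n. \<Sum>b'<dB. \<Sum>c<D. \<Sum>c'<D. F m b m' b' c c')"
    unfolding F_def by (simp add: sum_distrib_left sum_distrib_right mult_ac)
  also have "(\<Sum>m<n. \<Sum>b<dB. \<Sum>m'<n. \<Sum>b'<dB. \<Sum>c<D. \<Sum>c'<D. F m b m' b' c c')
     = (\<Sum>m<n. \<Sum>c<D. \<Sum>m'<n. \<Sum>c'<D. \<Sum>b<dB. \<Sum>b'<dB. F m b m' b' c c')"
    by (rule sum.cong[OF refl]) (rule reorder6)
  also have "\<dots> = (\<Sum>m<n. \<Sum>c<D. \<Sum>m'<n. \<Sum>c'<D. \<Sum>r<R. cnj (u r (m*D+c)) * Xf (m*D+c) (m'*D+c') * u r (m'*D+c'))"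
  proof (rule sum.cong[OF refl], rule sum.cong[OF refl], rule sum.cong[OF refl], rule sum.cong[OF refl])
    fix m c m' c' assume c: "c \<in> {..<D}" and c': "c' \<in> {..<D}"
    have cu: "cnj (u r (m*D+c)) = (\<Sum>b<dB. w r (c*dB + b) * cnj (v (m*dB + b)))" for r
      using c by (simp add: u_def)
    have uu: "u r (m'*D+c') = (\<Sum>b'<dB. cnj (w r (c'*dB + b')) * v (m'*dB + b'))" for r
      using c' by (simp add: u_def)
    have "(\<Sum>b<dB. \<Sum>b'<dB. F m b m' b' c c') = (\<Sum>b<dB. \<Sum>b'<dB. \<Sum>r<R. cnj (v (m*dB+b)) * Xf (m*D+c) (m'*D+c') * (w r (c*dB+b) * cnj (w r (c'*dB+b'))) * v (m'*dB+b'))"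
    proof (intro sum.cong refl)
      fix b b' assume b: "b \<in> {..<dB}" and b': "b' \<in> {..<dB}"
      have "c*dB+b < D*dB" "c'*dB+b' < D*dB" using b b' c c' lt_mult_split by auto
      then have "Sf (c*dB+b) (c'*dB+b') = (\<Sum>r<R. w r (c*dB+b) * cnj (w r (c'*dB+b')))" using S by simp
      then show "F m b m' b' c c' = (\<Sum>r<R. cnj (v (m*dB+b)) * Xf (m*D+c) (m'*D+c') * (w r (c*dB+b) * cnj (w r (c'*dB+b'))) * v (m'*dB+b'))"
        unfolding F_def by (simp add: sum_distrib_left sum_distrib_right)
    qed
    also have "\<dots> = (\<Sum>r<R. \<Sum>b<dB. \<Sum>b'<dB. cnj (v (m*dB+b)) * Xf (m*D+c) (m'*D+c') * (w r (c*dB+b) * cnj (w r (c'*dB+b'))) * v (m'*dB+b'))"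
      by (rule reorder3[symmetric])
    also have "\<dots> = (\<Sum>r<R. cnj (u r (m*D+c)) * Xf (m*D+c) (m'*D+c') * u r (m'*D+c'))"
      unfolding cu uu by (intro sum.cong refl) (simp add: sum_product sum_distrib_left sum_distrib_right mult_ac)
    finally show "(\<Sum>b<dB. \<Sum>b'<dB. F m b m' b' c c') = (\<Sum>r<R. cnj (u r (m*D+c)) * Xf (m*D+c) (m'*D+c') * u r (m'*D+c'))" .
  qed
  also have "\<dots> = (\<Sum>r<R. \<Sum>m<n. \<Sum>c<D. \<Sum>m'<n. \<Sum>c'<D. cnj (u r (m*D+c)) * Xf (m*D+c) (m'*D+c') * u r (m'*D+c'))"
    by (rule reorder5)
  also have "\<dots> = (\<Sum>r<R. bf (n*D) Xf (u r) (u r))"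
    unfolding bf_def sum_split_mult[of _ n D] by (intro sum.cong refl)
  finally show ?thesis by simp
qed

lemma sum_real_nonneg:
  assumes "\<And>r. r \<in> A \<Longrightarrow> z r \<in> \<real> \<and> Re (z r) \<ge> 0"
  shows "sum z A \<in> \<real> \<and> Re (sum z A) \<ge> 0"
proof
  have "Im (sum z A) = 0" using assms by (simp add: complex_is_Real_iff)
  then show "sum z A \<in> \<real>" by (simp add: complex_is_Real_iff)
  show "Re (sum z A) \<ge> 0" using assms by (simp add: sum_nonneg)
qed

definition choi_inv :: "nat \<Rightarrow> nat \<Rightarrow> complex mat \<Rightarrow> cmap" where
  "choi_inv D dB S X = mat dB dB (\<lambda>(b,b'). of_nat D * (\<Sum>c<D. \<Sum>c'<D. X$$(c,c') * S$$(c*dB+b, c'*dB+b')))"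

lemma linear_choi_inv: "linear_cmap D dB (choi_inv D dB S)"
  unfolding linear_cmap_def
proof (intro conjI ballI allI)
  fix X :: "complex mat" assume "X \<in> carrier_mat D D"
  show "choi_inv D dB S X \<in> carrier_mat dB dB" by (simp add: choi_inv_def)
next
  fix X Y :: "complex mat" assume X: "X \<in> carrier_mat D D" and Y: "Y \<in> carrier_mat D D"
  show "choi_inv D dB S (X + Y) = choi_inv D dB S X + choi_inv D dB S Y"
    using X Y by (auto simp: choi_inv_def ring_distribs sum.distrib intro!: eq_matI)
next
  fix X :: "complex mat" and c assume X: "X \<in> carrier_mat D D"
  show "choi_inv D dB S (c \<cdot>\<^sub>m X) = c \<cdot>\<^sub>m choi_inv D dB S X"
    using X by (auto simp: choi_inv_def sum_distrib_left mult_ac intro!: eq_matI)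
qed

lemma CP_choi_inv:
  assumes S: "psd (D*dB) S"
  shows "CP D dB (choi_inv D dB S)"
  unfolding CP_def
proof (intro conjI allI impI)
  show "linear_cmap D dB (choi_inv D dB S)" by (rule linear_choi_inv)
  fix n X assume X: "psd (n*D) X"
  obtain R :: nat and w where w: "\<forall>s<D*dB. \<forall>t<D*dB. S$$(s,t) = (\<Sum>r<R. w r s * cnj (w r t))"
    using psdf_decomp[of "D*dB" "\<lambda>s t. S$$(s,t)"] S unfolding psd_psdf by blast
  have PX: "psdf (n*D) (\<lambda>p q. X$$(p,q))" using X unfolding psd_psdf by blast
  define u where "u v = (\<lambda>r p. \<Sum>b<dB. cnj (w r ((p mod D)*dB + b)) * v ((p div D)*dB + b))" for v :: "nat \<Rightarrow> complex"
  have ent: "id_tensor n D dB (choi_inv D dB S) X $$ (i,j) = of_nat D * (\<Sum>c<D. \<Sum>c'<D. X $$ ((i div dB)*D+c, (j div dB)*D+c') * S $$ (c*dB + i mod dB, c'*dB + j mod dB))"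
    if "i < n*dB" "j < n*dB" for i j
  proof -
    have "dB > 0" using that by (cases dB) auto
    then show ?thesis using that by (simp add: id_tensor_def choi_inv_def)
  qed
  show "psd (n*dB) (id_tensor n D dB (choi_inv D dB S) X)"
    unfolding psd_psdf
  proof
    show "id_tensor n D dB (choi_inv D dB S) X \<in> carrier_mat (n*dB) (n*dB)" by (simp add: id_tensor_def)
    show "psdf (n*dB) (\<lambda>i j. id_tensor n D dB (choi_inv D dB S) X $$ (i,j))"
      unfolding psdf_def
    proof
      fix v :: "nat \<Rightarrow> complex"
      have "bf (n*dB) (\<lambda>i j. id_tensor n D dB (choi_inv D dB S) X $$ (i,j)) v v =
        (\<Sum>i<n*dB. \<Sum>j<n*dB. cnj (v i) * (of_nat D * (\<Sum>c<D. \<Sum>c'<D. X $$ ((i div dB)*D+c, (j div dB)*D+c') * S $$ (c*dB + i mod dB, c'*dB + j mod dB))) * v j)"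
        unfolding bf_def by (intro sum.cong refl) (simp add: ent)
      also have "\<dots> = of_nat D * (\<Sum>r<R. bf (n*D) (\<lambda>p q. X$$(p,q)) (u v r) (u v r))"
        unfolding u_def by (rule key_form[where Sf = "\<lambda>s t. S$$(s,t)", OF w])
      finally have eq: "bf (n*dB) (\<lambda>i j. id_tensor n D dB (choi_inv D dB S) X $$ (i,j)) v v = of_nat D * (\<Sum>r<R. bf (n*D) (\<lambda>p q. X$$(p,q)) (u v r) (u v r))" .
      have sm: "(\<Sum>r<R. bf (n*D) (\<lambda>p q. X$$(p,q)) (u v r) (u v r)) \<in> \<real> \<and> Re (\<Sum>r<R. bf (n*D) (\<lambda>p q. X$$(p,q)) (u v r) (u v r)) \<ge> 0"
        by (rule sum_real_nonneg) (rule psdfD[OF PX])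
      then show "bf (n*dB) (\<lambda>i j. id_tensor n D dB (choi_inv D dB S) X $$ (i,j)) v v \<in> \<real> \<and>
          0 \<le> Re (bf (n*dB) (\<lambda>i j. id_tensor n D dB (choi_inv D dB S) X $$ (i,j)) v v)"
        unfolding eq by (auto simp: complex_is_Real_iff)
    qed
  qed
qed

lemma psi_plus_psd:
  assumes D: "D > 0"
  shows "psd (D*D) (psi_plus D)"
  unfolding psd_psdf
proof
  show "psi_plus D \<in> carrier_mat (D*D) (D*D)" by (simp add: psi_plus_def)
  define \<phi> where "\<phi> i = (if i div D = i mod D then 1 else 0 :: complex)" for i
  have ent: "psi_plus D $$ (i,j) = \<phi> i * \<phi> j / of_nat D" if "i < D*D" "j < D*D" for i j
    using that by (simp add: psi_plus_def \<phi>_def)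
  have cphi: "cnj (\<phi> i) = \<phi> i" for i by (simp add: \<phi>_def)
  show "psdf (D*D) (\<lambda>i j. psi_plus D $$ (i,j))"
    unfolding psdf_def
  proof
    fix v :: "nat \<Rightarrow> complex"
    define s where "s = (\<Sum>j<D*D. \<phi> j * v j)"
    have "bf (D*D) (\<lambda>i j. psi_plus D $$ (i,j)) v v = (\<Sum>i<D*D. \<Sum>j<D*D. (cnj (v i) * \<phi> i) * (\<phi> j * v j) / of_nat D)"
      unfolding bf_def by (intro sum.cong refl) (simp add: ent)
    also have "\<dots> = (\<Sum>i<D*D. cnj (v i) * \<phi> i) * s / of_nat D"
      by (simp add: s_def sum_product sum_divide_distrib)
    also have "(\<Sum>i<D*D. cnj (v i) * \<phi> i) = cnj s"
      by (simp add: s_def cphi mult.commute)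
    also have "cnj s * s = of_real ((cmod s)^2)" using complex_norm_square[of s] by (simp add: mult.commute)
    finally have eq: "bf (D*D) (\<lambda>i j. psi_plus D $$ (i,j)) v v = of_real ((cmod s)^2 / real D)" by simp
    show "bf (D*D) (\<lambda>i j. psi_plus D $$ (i,j)) v v \<in> \<real> \<and> 0 \<le> Re (bf (D*D) (\<lambda>i j. psi_plus D $$ (i,j)) v v)"
      unfolding eq by simp
  qed
qed

lemma id_tensor_cong:
  assumes "\<And>X. X \<in> carrier_mat din din \<Longrightarrow> \<Psi> X = \<Phi> X"
  shows "id_tensor n din dout \<Psi> Y = id_tensor n din dout \<Phi> Y"
  unfolding id_tensor_def using assms by simp

lemma channel_cong:
  assumes ch: "channel din dout \<Phi>" and eq: "\<And>X. X \<in> carrier_mat din din \<Longrightarrow> \<Psi> X = \<Phi> X"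
  shows "channel din dout \<Psi>"
proof -
  have lin: "linear_cmap din dout \<Phi>" using ch by (simp add: channel_linear)
  have "linear_cmap din dout \<Psi>"
    unfolding linear_cmap_def
  proof (intro conjI ballI allI)
    fix X :: "complex mat" assume X: "X \<in> carrier_mat din din"
    show "\<Psi> X \<in> carrier_mat dout dout" using eq[OF X] linear_cmapD(1)[OF lin X] by simp
  next
    fix X Y :: "complex mat" assume X: "X \<in> carrier_mat din din" and Y: "Y \<in> carrier_mat din din"
    have "X + Y \<in> carrier_mat din din" using X Y by simp
    then show "\<Psi> (X + Y) = \<Psi> X + \<Psi> Y" using eq X Y linear_cmapD(2)[OF lin X Y] by simp
  next
    fix X :: "complex mat" and c assume X: "X \<in> carrier_mat din din"
    have "c \<cdot>\<^sub>m X \<in> carrier_mat din din" using X by simp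
    then show "\<Psi> (c \<cdot>\<^sub>m X) = c \<cdot>\<^sub>m \<Psi> X" using eq X linear_cmapD(3)[OF lin X] by simp
  qed
  moreover have "\<forall>n X. psd (n*din) X \<longrightarrow> psd (n*dout) (id_tensor n din dout \<Psi> X)"
    using ch eq unfolding channel_def CP_def by (simp add: id_tensor_cong[OF eq])
  moreover have "TP din dout \<Psi>" using ch eq unfolding channel_def TP_def by simp
  ultimately show ?thesis unfolding channel_def CP_def by simp
qed

lemma msum_entry: "i < d \<Longrightarrow> j < d \<Longrightarrow> msum d n F $$ (i,j) = (\<Sum>k<n. F k $$ (i,j))"
  by (simp add: msum_def)

lemma msum_carrier: "msum d n F \<in> carrier_mat d d"
  by (simp add: msum_def)


lemma induced_eq: "induced_assemblage dA dB \<Lambda>AB M a x = (\<lambda>X. ptrace1 dA dB (tensor (M a x) (1\<^sub>m dB) * \<Lambda>AB X))"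
  by (rule ext) (simp add: induced_assemblage_def)

lemma meas_carrier: "meas_assemblage d na nx M \<Longrightarrow> a < na \<Longrightarrow> x < nx \<Longrightarrow> M a x \<in> carrier_mat d d"
  by (simp add: meas_assemblage_def psd_def)

lemma meas_sum_entry:
  assumes "meas_assemblage d na nx M" "x < nx" "k < d" "k' < d"
  shows "(\<Sum>a<na. M a x $$ (k,k')) = (if k = k' then 1 else 0)"
proof -
  have "msum d na (\<lambda>a. M a x) = 1\<^sub>m d" using assms unfolding meas_assemblage_def by blast
  then have "msum d na (\<lambda>a. M a x) $$ (k,k') = 1\<^sub>m d $$ (k,k')" by simp
  then show ?thesis using assms by (simp add: msum_entry)
qed

lemma smult_entry: "A \<in> carrier_mat d d \<Longrightarrow> i < d \<Longrightarrow> j < d \<Longrightarrow> (c \<cdot>\<^sub>m A) $$ (i,j) = c * A $$ (i,j)"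
  by simp

lemma msum_smult_entry:
  assumes "\<And>l. l < n \<Longrightarrow> F l \<in> carrier_mat d d" "i < d" "j < d"
  shows "msum d n (\<lambda>l. c l \<cdot>\<^sub>m F l) $$ (i,j) = (\<Sum>l<n. c l * F l $$ (i,j))"
proof -
  have "msum d n (\<lambda>l. c l \<cdot>\<^sub>m F l) $$ (i,j) = (\<Sum>l<n. (c l \<cdot>\<^sub>m F l) $$ (i,j))"
    using assms by (simp add: msum_entry)
  also have "\<dots> = (\<Sum>l<n. c l * F l $$ (i,j))"
    by (intro sum.cong refl) (rule smult_entry[OF assms(1) assms(2,3)], simp)
  finally show ?thesis .
qed

lemma sum_instrument:
  assumes ext: "channel_extension dA dB dC \<Lambda>AB \<Lambda>B"
    and MA: "meas_assemblage dA na nx M" and x0: "0 < nx"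
    and cp: "cond_prob na nx nl p"
    and linI: "\<And>l. l < nl \<Longrightarrow> linear_cmap dC dB (I l)"
    and eqs: "\<forall>a<na. \<forall>x<nx. \<forall>X \<in> carrier_mat dC dC.
           induced_assemblage dA dB \<Lambda>AB M a x X = msum dB nl (\<lambda>l. complex_of_real (p a x l) \<cdot>\<^sub>m I l X)"
    and X: "X \<in> carrier_mat dC dC"
  shows "msum dB nl (\<lambda>l. I l X) = \<Lambda>B X"
proof -
  have linAB: "linear_cmap dC (dA*dB) \<Lambda>AB" using ext by (simp add: channel_extension_def channel_linear)
  have LX: "\<Lambda>AB X \<in> carrier_mat (dA*dB) (dA*dB)" using linear_cmapD(1)[OF linAB X] .
  have IX: "I l X \<in> carrier_mat dB dB" if "l < nl" for l using linear_cmapD(1)[OF linI[OF that] X] .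
  have PB: "ptrace1 dA dB (\<Lambda>AB X) = \<Lambda>B X" using ext X by (simp add: channel_extension_def)
  show ?thesis
  proof (rule eq_matI)
    show "dim_row (msum dB nl (\<lambda>l. I l X)) = dim_row (\<Lambda>B X)" "dim_col (msum dB nl (\<lambda>l. I l X)) = dim_col (\<Lambda>B X)"
      using PB[symmetric] by (simp_all add: msum_def ptrace1_def)
    fix b b' assume "b < dim_row (\<Lambda>B X)" "b' < dim_col (\<Lambda>B X)"
    then have b: "b < dB" and b': "b' < dB" using PB[symmetric] by (simp_all add: ptrace1_def)
    have "msum dB nl (\<lambda>l. I l X) $$ (b,b') = (\<Sum>l<nl. I l X $$ (b,b'))" using b b' by (simp add: msum_entry)
    also have "\<dots> = (\<Sum>l<nl. \<Sum>a<na. p a 0 l * I l X $$ (b,b'))"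
    proof (intro sum.cong refl)
      fix l assume l: "l \<in> {..<nl}"
      have "(\<Sum>a<na. p a 0 l) = 1" using cp x0 l unfolding cond_prob_def by auto
      then have "(\<Sum>a<na. complex_of_real (p a 0 l)) = 1" by (metis of_real_1 of_real_sum)
      then show "I l X $$ (b,b') = (\<Sum>a<na. p a 0 l * I l X $$ (b,b'))" by (simp add: sum_distrib_right[symmetric])
    qed
    also have "\<dots> = (\<Sum>a<na. \<Sum>l<nl. p a 0 l * I l X $$ (b,b'))" by (rule sum.swap)
    also have "\<dots> = (\<Sum>a<na. induced_assemblage dA dB \<Lambda>AB M a 0 X $$ (b,b'))"
    proof (intro sum.cong refl)
      fix a assume a: "a \<in> {..<na}"
      have "induced_assemblage dA dB \<Lambda>AB M a 0 X = msum dB nl (\<lambda>l. complex_of_real (p a 0 l) \<cdot>\<^sub>m I l X)"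
        using eqs a x0 X by auto
      then show "(\<Sum>l<nl. p a 0 l * I l X $$ (b,b')) = induced_assemblage dA dB \<Lambda>AB M a 0 X $$ (b,b')"
        using msum_smult_entry[OF IX b b'] by simp
    qed
    also have "\<dots> = (\<Sum>a<na. \<Sum>k<dA. \<Sum>k'<dA. M a 0 $$ (k,k') * \<Lambda>AB X $$ (k'*dB+b, k*dB+b'))"
      unfolding induced_eq using ptrace_tensor_mult[OF meas_carrier[OF MA _ x0] LX b b'] by simp
    also have "\<dots> = (\<Sum>k<dA. \<Sum>k'<dA. (\<Sum>a<na. M a 0 $$ (k,k')) * \<Lambda>AB X $$ (k'*dB+b, k*dB+b'))"
      by (simp add: sum_distrib_right sum.swap[of _ "{..<na}"])
    also have "\<dots> = (\<Sum>k<dA. \<Sum>k'<dA. (if k = k' then \<Lambda>AB X $$ (k'*dB+b, k*dB+b') else 0))"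
      by (intro sum.cong refl) (simp add: meas_sum_entry[OF MA x0])
    also have "\<dots> = ptrace1 dA dB (\<Lambda>AB X) $$ (b,b')"
      using b b' by (simp add: ptrace1_def)
    finally show "msum dB nl (\<lambda>l. I l X) $$ (b,b') = \<Lambda>B X $$ (b,b')" using PB by simp
  qed
qed

lemma choi_psd: "CP D dY \<Gamma> \<Longrightarrow> D > 0 \<Longrightarrow> psd (D*dY) (choi D dY \<Gamma>)"
  unfolding choi_def CP_def using psi_plus_psd by blast

definition Psi :: "nat \<Rightarrow> nat \<Rightarrow> nat \<Rightarrow> complex mat" where
  "Psi D c c' = mat D D (\<lambda>(k,l). if k = c \<and> l = c' then 1/of_nat D else 0)"

lemma Psi_carrier: "Psi D c c' \<in> carrier_mat D D" by (simp add: Psi_def)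

lemma choi_entry': "c < D \<Longrightarrow> c' < D \<Longrightarrow> y < dY \<Longrightarrow> y' < dY \<Longrightarrow>
  choi D dY \<Gamma> $$ (c*dY+y, c'*dY+y') = \<Gamma> (Psi D c c') $$ (y,y')"
  unfolding Psi_def by (rule choi_entry)

lemma dir1:
  assumes ext: "channel_extension dA dB dC \<Lambda>AB \<Lambda>B" and chB: "channel dC dB \<Lambda>B" and dC: "dC > 0"
    and UE: "unsteerable_extension dA dB dC \<Lambda>AB"
  shows "unsteerable_state dA (dC*dB) (reorder_CAB_to_A_CB dC dA dB (choi dC (dA*dB) \<Lambda>AB))"
  unfolding unsteerable_state_def
proof (intro allI impI)
  fix na nx M assume MA: "meas_assemblage dA na nx M"
  define \<rho> where "\<rho> = reorder_CAB_to_A_CB dC dA dB (choi dC (dA*dB) \<Lambda>AB)"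
  have linAB: "linear_cmap dC (dA*dB) \<Lambda>AB" using ext by (simp add: channel_extension_def channel_linear)
  have red: "ptrace1 dA (dC*dB) \<rho> = choi dC dB \<Lambda>B" unfolding \<rho>_def by (rule reduced_choi[OF ext chB])
  obtain nl I p where inst: "instrument dC dB nl I" and cp: "cond_prob na nx nl p"
    and eqs: "\<forall>a<na. \<forall>x<nx. \<forall>X \<in> carrier_mat dC dC.
           induced_assemblage dA dB \<Lambda>AB M a x X = msum dB nl (\<lambda>l. complex_of_real (p a x l) \<cdot>\<^sub>m I l X)"
    using UE MA unfolding unsteerable_extension_def unsteerable_channel_assemblage_def by blast
  have CPI: "CP dC dB (I l)" if "l < nl" for l using inst that by (simp add: instrument_def)
  have linI: "linear_cmap dC dB (I l)" if "l < nl" for l using CPI[OF that] by (simp add: CP_def)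
  show "\<exists>nl \<sigma> p. (\<forall>l<nl. psd (dC*dB) (\<sigma> l)) \<and> msum (dC*dB) nl \<sigma> = ptrace1 dA (dC*dB) \<rho> \<and>
           cond_prob na nx nl p \<and>
           (\<forall>a<na. \<forall>x<nx. ptrace1 dA (dC*dB) (tensor (M a x) (1\<^sub>m (dC*dB)) * \<rho>) =
               msum (dC*dB) nl (\<lambda>l. complex_of_real (p a x l) \<cdot>\<^sub>m \<sigma> l))"
  proof (cases "nx = 0")
    case True
    have "msum (dC*dB) 1 (\<lambda>_. choi dC dB \<Lambda>B) = ptrace1 dA (dC*dB) \<rho>"
      unfolding red using choi_carrier[of dC dB \<Lambda>B] by (auto simp: msum_def intro!: eq_matI)
    moreover have "psd (dC*dB) (choi dC dB \<Lambda>B)" using chB dC choi_psd by (simp add: channel_def)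
    moreover have "cond_prob na nx 1 p" using True by (simp add: cond_prob_def)
    ultimately show ?thesis using True by (intro exI[of _ "1::nat"] exI[of _ "\<lambda>_. choi dC dB \<Lambda>B"] exI[of _ p]) auto
  next
    case False
    then have x0: "0 < nx" by simp
    have sumI: "msum dB nl (\<lambda>l. I l X) = \<Lambda>B X" if "X \<in> carrier_mat dC dC" for X
      by (rule sum_instrument[OF ext MA x0 cp linI eqs that])
    have psdI: "\<forall>l<nl. psd (dC*dB) (choi dC dB (I l))" using CPI choi_psd dC by blast
    have sig: "msum (dC*dB) nl (\<lambda>l. choi dC dB (I l)) = ptrace1 dA (dC*dB) \<rho>"
      unfolding red
    proof (rule mat_eq_blocks[OF msum_carrier choi_carrier])
      fix c b c' b' assume c: "c < dC" and b: "b < dB" and c': "c' < dC" and b': "b' < dB"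
      have q: "c*dB+b < dC*dB" "c'*dB+b' < dC*dB" using c b c' b' lt_mult_split by auto
      have "msum (dC*dB) nl (\<lambda>l. choi dC dB (I l)) $$ (c*dB+b, c'*dB+b') = (\<Sum>l<nl. I l (Psi dC c c') $$ (b,b'))"
        using q c c' b b' by (simp add: msum_entry choi_entry')
      also have "\<dots> = msum dB nl (\<lambda>l. I l (Psi dC c c')) $$ (b,b')" using b b' by (simp add: msum_entry)
      also have "\<dots> = \<Lambda>B (Psi dC c c') $$ (b,b')" using sumI[OF Psi_carrier] by simp
      also have "\<dots> = choi dC dB \<Lambda>B $$ (c*dB+b, c'*dB+b')" using c c' b b' by (simp add: choi_entry')
      finally show "msum (dC*dB) nl (\<lambda>l. choi dC dB (I l)) $$ (c*dB+b, c'*dB+b') = choi dC dB \<Lambda>B $$ (c*dB+b, c'*dB+b')" .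
    qed
    have asm: "ptrace1 dA (dC*dB) (tensor (M a x) (1\<^sub>m (dC*dB)) * \<rho>) =
               msum (dC*dB) nl (\<lambda>l. complex_of_real (p a x l) \<cdot>\<^sub>m choi dC dB (I l))" if a: "a < na" and x: "x < nx" for a x
    proof -
      have Mc: "M a x \<in> carrier_mat dA dA" using meas_carrier[OF MA a x] .
      have "ptrace1 dA (dC*dB) (tensor (M a x) (1\<^sub>m (dC*dB)) * \<rho>) = choi dC dB (induced_assemblage dA dB \<Lambda>AB M a x)"
        unfolding \<rho>_def induced_eq by (rule assemblage_choi[OF linAB Mc])
      also have "\<dots> = msum (dC*dB) nl (\<lambda>l. complex_of_real (p a x l) \<cdot>\<^sub>m choi dC dB (I l))"
      proof (rule mat_eq_blocks[OF choi_carrier msum_carrier])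
        fix c b c' b' assume c: "c < dC" and b: "b < dB" and c': "c' < dC" and b': "b' < dB"
        have q: "c*dB+b < dC*dB" "c'*dB+b' < dC*dB" using c b c' b' lt_mult_split by auto
        have IP: "I l (Psi dC c c') \<in> carrier_mat dB dB" if "l < nl" for l
          using linear_cmapD(1)[OF linI[OF that] Psi_carrier] .
        have "choi dC dB (induced_assemblage dA dB \<Lambda>AB M a x) $$ (c*dB+b, c'*dB+b') = induced_assemblage dA dB \<Lambda>AB M a x (Psi dC c c') $$ (b,b')"
          using c c' b b' by (rule choi_entry')
        also have "\<dots> = msum dB nl (\<lambda>l. complex_of_real (p a x l) \<cdot>\<^sub>m I l (Psi dC c c')) $$ (b,b')"
          using eqs a x Psi_carrier by simp
        also have "\<dots> = (\<Sum>l<nl. complex_of_real (p a x l) * I l (Psi dC c c') $$ (b,b'))"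
          by (rule msum_smult_entry[OF IP b b'])
        also have "\<dots> = (\<Sum>l<nl. complex_of_real (p a x l) * choi dC dB (I l) $$ (c*dB+b, c'*dB+b'))"
          using c c' b b' by (simp add: choi_entry')
        also have "\<dots> = msum (dC*dB) nl (\<lambda>l. complex_of_real (p a x l) \<cdot>\<^sub>m choi dC dB (I l)) $$ (c*dB+b, c'*dB+b')"
          by (rule msum_smult_entry[OF choi_carrier q, symmetric])
        finally show "choi dC dB (induced_assemblage dA dB \<Lambda>AB M a x) $$ (c*dB+b, c'*dB+b') =
           msum (dC*dB) nl (\<lambda>l. complex_of_real (p a x l) \<cdot>\<^sub>m choi dC dB (I l)) $$ (c*dB+b, c'*dB+b')" .
      qed
      finally show ?thesis .
    qed
    show ?thesis
      by (rule exI[of _ nl], rule exI[of _ "\<lambda>l. choi dC dB (I l)"], rule exI[of _ p])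
         (use psdI sig cp asm in auto)
  qed
qed

lemma dir2:
  assumes ext: "channel_extension dA dB dC \<Lambda>AB \<Lambda>B" and chB: "channel dC dB \<Lambda>B" and dC: "dC > 0"
    and US: "unsteerable_state dA (dC*dB) (reorder_CAB_to_A_CB dC dA dB (choi dC (dA*dB) \<Lambda>AB))"
  shows "unsteerable_extension dA dB dC \<Lambda>AB"
  unfolding unsteerable_extension_def
proof (intro allI impI)
  fix na nx M assume MA: "meas_assemblage dA na nx M"
  define \<rho> where "\<rho> = reorder_CAB_to_A_CB dC dA dB (choi dC (dA*dB) \<Lambda>AB)"
  have linAB: "linear_cmap dC (dA*dB) \<Lambda>AB" using ext by (simp add: channel_extension_def channel_linear)
  have linB: "linear_cmap dC dB \<Lambda>B" using chB by (simp add: channel_linear)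
  have red: "ptrace1 dA (dC*dB) \<rho> = choi dC dB \<Lambda>B" unfolding \<rho>_def by (rule reduced_choi[OF ext chB])
  obtain nl \<sigma> p where psdS: "\<forall>l<nl. psd (dC*dB) (\<sigma> l)" and sumS: "msum (dC*dB) nl \<sigma> = ptrace1 dA (dC*dB) \<rho>"
    and cp: "cond_prob na nx nl p"
    and eqs: "\<forall>a<na. \<forall>x<nx. ptrace1 dA (dC*dB) (tensor (M a x) (1\<^sub>m (dC*dB)) * \<rho>) =
               msum (dC*dB) nl (\<lambda>l. complex_of_real (p a x l) \<cdot>\<^sub>m \<sigma> l)"
    using US MA unfolding unsteerable_state_def \<rho>_def by blast
  have Sc: "\<sigma> l \<in> carrier_mat (dC*dB) (dC*dB)" if "l < nl" for l using psdS that by (simp add: psd_def)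
  define I where "I l = choi_inv dC dB (\<sigma> l)" for l
  have ent: "I l X $$ (b,b') = of_nat dC * (\<Sum>c<dC. \<Sum>c'<dC. X$$(c,c') * \<sigma> l $$(c*dB+b, c'*dB+b'))"
    if "b < dB" "b' < dB" for l X b b' using that by (simp add: I_def choi_inv_def)
  have Ic: "I l X \<in> carrier_mat dB dB" for l X by (simp add: I_def choi_inv_def)
  have sumI: "msum dB nl (\<lambda>l. I l X) = \<Lambda>B X" if X: "X \<in> carrier_mat dC dC" for X
  proof (rule eq_matI)
    show "dim_row (msum dB nl (\<lambda>l. I l X)) = dim_row (\<Lambda>B X)" "dim_col (msum dB nl (\<lambda>l. I l X)) = dim_col (\<Lambda>B X)"
      using linear_cmapD(1)[OF linB X] by (simp_all add: msum_def)
    fix b b' assume "b < dim_row (\<Lambda>B X)" "b' < dim_col (\<Lambda>B X)"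
    then have b: "b < dB" and b': "b' < dB" using linear_cmapD(1)[OF linB X] by auto
    have "msum dB nl (\<lambda>l. I l X) $$ (b,b') = (\<Sum>l<nl. of_nat dC * (\<Sum>c<dC. \<Sum>c'<dC. X$$(c,c') * \<sigma> l $$(c*dB+b, c'*dB+b')))"
      using b b' by (simp add: msum_entry ent)
    also have "\<dots> = of_nat dC * (\<Sum>c<dC. \<Sum>c'<dC. X$$(c,c') * (\<Sum>l<nl. \<sigma> l $$(c*dB+b, c'*dB+b')))"
      by (simp add: sum_distrib_left sum.swap[of _ "{..<nl}"])
    also have "\<dots> = of_nat dC * (\<Sum>c<dC. \<Sum>c'<dC. X$$(c,c') * choi dC dB \<Lambda>B $$(c*dB+b, c'*dB+b'))"
    proof -
      have "(\<Sum>l<nl. \<sigma> l $$(c*dB+b, c'*dB+b')) = choi dC dB \<Lambda>B $$(c*dB+b, c'*dB+b')"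
        if "c < dC" "c' < dC" for c c'
      proof -
        have q: "c*dB+b < dC*dB" "c'*dB+b' < dC*dB" using that b b' lt_mult_split by auto
        show ?thesis using arg_cong[OF sumS, of "\<lambda>A. A $$ (c*dB+b, c'*dB+b')"] red q
          by (simp add: msum_entry)
      qed
      then show ?thesis by simp
    qed
    also have "\<dots> = \<Lambda>B X $$ (b,b')" using linear_choi_reconstruct[OF linB X b b' dC] by simp
    finally show "msum dB nl (\<lambda>l. I l X) $$ (b,b') = \<Lambda>B X $$ (b,b')" .
  qed
  have inst: "instrument dC dB nl I"
    unfolding instrument_def
  proof
    show "\<forall>l<nl. CP dC dB (I l)" using psdS CP_choi_inv unfolding I_def by blast
    show "channel dC dB (\<lambda>X. msum dB nl (\<lambda>l. I l X))" by (rule channel_cong[OF chB sumI])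
  qed
  have asm: "induced_assemblage dA dB \<Lambda>AB M a x X = msum dB nl (\<lambda>l. complex_of_real (p a x l) \<cdot>\<^sub>m I l X)"
    if a: "a < na" and x: "x < nx" and X: "X \<in> carrier_mat dC dC" for a x X
  proof -
    have Mc: "M a x \<in> carrier_mat dA dA" using meas_carrier[OF MA a x] .
    have linG: "linear_cmap dC dB (induced_assemblage dA dB \<Lambda>AB M a x)"
      unfolding induced_eq by (rule linear_indmap[OF linAB Mc])
    have cg: "choi dC dB (induced_assemblage dA dB \<Lambda>AB M a x) = msum (dC*dB) nl (\<lambda>l. complex_of_real (p a x l) \<cdot>\<^sub>m \<sigma> l)"
      using assemblage_choi[OF linAB Mc] eqs a x unfolding induced_eq \<rho>_def by simp
    show ?thesis
    proof (rule eq_matI)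
      show "dim_row (induced_assemblage dA dB \<Lambda>AB M a x X) = dim_row (msum dB nl (\<lambda>l. complex_of_real (p a x l) \<cdot>\<^sub>m I l X))"
        "dim_col (induced_assemblage dA dB \<Lambda>AB M a x X) = dim_col (msum dB nl (\<lambda>l. complex_of_real (p a x l) \<cdot>\<^sub>m I l X))"
        using linear_cmapD(1)[OF linG X] by (simp_all add: msum_def)
      fix b b' assume "b < dim_row (msum dB nl (\<lambda>l. complex_of_real (p a x l) \<cdot>\<^sub>m I l X))"
        "b' < dim_col (msum dB nl (\<lambda>l. complex_of_real (p a x l) \<cdot>\<^sub>m I l X))"
      then have b: "b < dB" and b': "b' < dB" by (simp_all add: msum_def)
      have "induced_assemblage dA dB \<Lambda>AB M a x X $$ (b,b') =
         of_nat dC * (\<Sum>c<dC. \<Sum>c'<dC. X$$(c,c') * choi dC dB (induced_assemblage dA dB \<Lambda>AB M a x) $$ (c*dB+b, c'*dB+b'))"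
        by (rule linear_choi_reconstruct[OF linG X b b' dC])
      also have "\<dots> = of_nat dC * (\<Sum>c<dC. \<Sum>c'<dC. X$$(c,c') * (\<Sum>l<nl. complex_of_real (p a x l) * \<sigma> l $$ (c*dB+b, c'*dB+b')))"
      proof -
        have "choi dC dB (induced_assemblage dA dB \<Lambda>AB M a x) $$ (c*dB+b, c'*dB+b') = (\<Sum>l<nl. complex_of_real (p a x l) * \<sigma> l $$ (c*dB+b, c'*dB+b'))"
          if "c < dC" "c' < dC" for c c'
        proof -
          have q: "c*dB+b < dC*dB" "c'*dB+b' < dC*dB" using that b b' lt_mult_split by auto
          show ?thesis unfolding cg by (rule msum_smult_entry[OF Sc q])
        qed
        then show ?thesis by simp
      qed
      also have "\<dots> = (\<Sum>l<nl. complex_of_real (p a x l) * I l X $$ (b,b'))"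
        using b b' by (simp add: ent sum_distrib_left sum.swap[of _ "{..<nl}"] mult_ac)
      also have "\<dots> = msum dB nl (\<lambda>l. complex_of_real (p a x l) \<cdot>\<^sub>m I l X) $$ (b,b')"
        by (rule msum_smult_entry[OF Ic b b', symmetric])
      finally show "induced_assemblage dA dB \<Lambda>AB M a x X $$ (b,b') = msum dB nl (\<lambda>l. complex_of_real (p a x l) \<cdot>\<^sub>m I l X) $$ (b,b')" .
    qed
  qed
  show "unsteerable_channel_assemblage dC dB na nx (induced_assemblage dA dB \<Lambda>AB M)"
    unfolding unsteerable_channel_assemblage_def
    by (rule exI[of _ nl], rule exI[of _ I], rule exI[of _ p]) (use inst cp asm in auto)
qed

theorem theorem1:
  fixes dA dB dC :: nat and \<Lambda>AB \<Lambda>B :: cmap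
  assumes "dA > 0" and "dB > 0" and "dC > 0"
    and "channel dC dB \<Lambda>B"
    and "channel_extension dA dB dC \<Lambda>AB \<Lambda>B"
  shows "steerable_extension dA dB dC \<Lambda>AB \<longleftrightarrow>
         steerable_state dA (dC*dB) (reorder_CAB_to_A_CB dC dA dB (choi dC (dA*dB) \<Lambda>AB))"
  unfolding steerable_extension_def steerable_state_def
  using dir1[OF assms(5,4,3)] dir2[OF assms(5,4,3)] by blast

end
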